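(* Let $N$ be a graded ideal of a Lie superalgebra $L$. Then $N\subseteq Z^{\wedge}(L)$ if and only if the natural map $L\wedge L\to (L/N)\wedge(L/N)$, $x\wedge y\mapsto (x+N)\wedge(y+N)$, is a monomorphism.
   Context: All algebras are over a field $\mathbb{F}$ of characteristic $\neq 2,3$. Non-abelian tensor square: $L\otimes L$ is the Lie superalgebra generated by symbols $x\otimes y$ ($x,y$ homogeneous, $|x\otimes y|=|x|+|y|$) subject to bilinearity, $[x,x']\otimes y=x\otimes[x',y]-(-1)^{|x||x'|}x'\otimes[x,y]$, $x\otimes[y,y']=(-1)^{|y'|(|x|+|y|)}[y',x]\otimes y-(-1)^{|x||y|}[y,x]\otimes y'$, and $[x\otimes y,x'\otimes y']=-(-1)^{|x||y|}[y,x]\otimes[x',y']$. The exterior square is $L\wedge L=(L\otimes L)/(L\square L)$, where $L\square L$ is the graded ideal generated by $x\otimes y+(-1)^{|x||y|}y\otimes x$ for homogeneous $x,y$ and by $x_0\otimes x_0$ for $x_0\in L_{\bar 0}$; the image of $x\otimes y$ is written $x\wedge y$. The exterior center is $Z^{\wedge}(L)=\{x\in L: x\wedge y=0 \text{ for all } y\in L\}$. *)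

theory Defs
  imports Main
begin

record ('k, 'a) lsa =
  lcarr :: "'a set"
  lzero :: 'a
  ladd  :: "'a \<Rightarrow> 'a \<Rightarrow> 'a"
  lneg  :: "'a \<Rightarrow> 'a"
  lsmul :: "'k \<Rightarrow> 'a \<Rightarrow> 'a"
  lbr   :: "'a \<Rightarrow> 'a \<Rightarrow> 'a"
  lev   :: "'a set"
  lod   :: "'a set"

definition lhom :: "('k, 'a, 'b) lsa_scheme \<Rightarrow> 'a set" where
  "lhom L = lev L \<union> lod L"

text \<open>degree of a homogeneous element (0 is taken to be even)\<close>
definition ldeg :: "('k, 'a, 'b) lsa_scheme \<Rightarrow> 'a \<Rightarrow> nat" where
  "ldeg L x = (if x \<in> lev L then 0 else 1)"

definition lsign :: "('k::field, 'a, 'b) lsa_scheme \<Rightarrow> 'a \<Rightarrow> 'a \<Rightarrow> 'k" where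
  "lsign L x y = (-1) ^ (ldeg L x * ldeg L y)"

definition lsub :: "('k, 'a, 'b) lsa_scheme \<Rightarrow> 'a \<Rightarrow> 'a \<Rightarrow> 'a" where
  "lsub L x y = ladd L x (lneg L y)"

definition subspace_of :: "('k, 'a, 'b) lsa_scheme \<Rightarrow> 'a set \<Rightarrow> bool" where
  "subspace_of L S \<longleftrightarrow> S \<subseteq> lcarr L \<and> lzero L \<in> S \<and>
     (\<forall>x\<in>S. \<forall>y\<in>S. ladd L x y \<in> S) \<and> (\<forall>c. \<forall>x\<in>S. lsmul L c x \<in> S)"

definition is_lsa :: "('k::field, 'a, 'b) lsa_scheme \<Rightarrow> bool" where
  "is_lsa L \<longleftrightarrow>
     \<comment> \<open>vector space over 'k\<close>
     lzero L \<in> lcarr L \<and>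
     (\<forall>x\<in>lcarr L. \<forall>y\<in>lcarr L. ladd L x y \<in> lcarr L) \<and>
     (\<forall>x\<in>lcarr L. lneg L x \<in> lcarr L) \<and>
     (\<forall>c. \<forall>x\<in>lcarr L. lsmul L c x \<in> lcarr L) \<and>
     (\<forall>x\<in>lcarr L. \<forall>y\<in>lcarr L. \<forall>z\<in>lcarr L. ladd L (ladd L x y) z = ladd L x (ladd L y z)) \<and>
     (\<forall>x\<in>lcarr L. \<forall>y\<in>lcarr L. ladd L x y = ladd L y x) \<and>
     (\<forall>x\<in>lcarr L. ladd L x (lzero L) = x) \<and>
     (\<forall>x\<in>lcarr L. ladd L x (lneg L x) = lzero L) \<and>
     (\<forall>a. \<forall>x\<in>lcarr L. \<forall>y\<in>lcarr L. lsmul L a (ladd L x y) = ladd L (lsmul L a x) (lsmul L a y)) \<and>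
     (\<forall>a b. \<forall>x\<in>lcarr L. lsmul L (a + b) x = ladd L (lsmul L a x) (lsmul L b x)) \<and>
     (\<forall>a b. \<forall>x\<in>lcarr L. lsmul L (a * b) x = lsmul L a (lsmul L b x)) \<and>
     (\<forall>x\<in>lcarr L. lsmul L 1 x = x) \<and>
     \<comment> \<open>Z/2-grading L = L_0 (+) L_1\<close>
     subspace_of L (lev L) \<and> subspace_of L (lod L) \<and>
     lev L \<inter> lod L = {lzero L} \<and>
     (\<forall>x\<in>lcarr L. \<exists>a\<in>lev L. \<exists>b\<in>lod L. x = ladd L a b) \<and>
     \<comment> \<open>bilinear graded bracket\<close>
     (\<forall>x\<in>lcarr L. \<forall>y\<in>lcarr L. lbr L x y \<in> lcarr L) \<and>
     (\<forall>x\<in>lcarr L. \<forall>y\<in>lcarr L. \<forall>z\<in>lcarr L.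
        lbr L (ladd L x y) z = ladd L (lbr L x z) (lbr L y z) \<and>
        lbr L z (ladd L x y) = ladd L (lbr L z x) (lbr L z y)) \<and>
     (\<forall>c. \<forall>x\<in>lcarr L. \<forall>y\<in>lcarr L.
        lbr L (lsmul L c x) y = lsmul L c (lbr L x y) \<and>
        lbr L x (lsmul L c y) = lsmul L c (lbr L x y)) \<and>
     (\<forall>x\<in>lev L. \<forall>y\<in>lev L. lbr L x y \<in> lev L) \<and>
     (\<forall>x\<in>lev L. \<forall>y\<in>lod L. lbr L x y \<in> lod L \<and> lbr L y x \<in> lod L) \<and>
     (\<forall>x\<in>lod L. \<forall>y\<in>lod L. lbr L x y \<in> lev L) \<and>
     \<comment> \<open>super skew-symmetry and super Jacobi identity (homogeneous elements)\<close>
     (\<forall>x\<in>lhom L. \<forall>y\<in>lhom L. lbr L x y = lneg L (lsmul L (lsign L x y) (lbr L y x))) \<and>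
     (\<forall>x\<in>lhom L. \<forall>y\<in>lhom L. \<forall>z\<in>lhom L.
        ladd L (ladd L (lsmul L (lsign L x z) (lbr L x (lbr L y z)))
                       (lsmul L (lsign L y x) (lbr L y (lbr L z x))))
               (lsmul L (lsign L z y) (lbr L z (lbr L x y))) = lzero L)"

definition comp0 :: "('k, 'a, 'b) lsa_scheme \<Rightarrow> 'a \<Rightarrow> 'a" where
  "comp0 L x = (THE a. a \<in> lev L \<and> lsub L x a \<in> lod L)"

definition comp1 :: "('k, 'a, 'b) lsa_scheme \<Rightarrow> 'a \<Rightarrow> 'a" where
  "comp1 L x = lsub L x (comp0 L x)"

definition graded_ideal :: "('k, 'a, 'b) lsa_scheme \<Rightarrow> 'a set \<Rightarrow> bool" where
  "graded_ideal L N \<longleftrightarrow> subspace_of L N \<and> (\<forall>x\<in>N. comp0 L x \<in> N) \<and>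
     (\<forall>x\<in>lcarr L. \<forall>n\<in>N. lbr L x n \<in> N)"

definition coset :: "('k, 'a, 'b) lsa_scheme \<Rightarrow> 'a set \<Rightarrow> 'a \<Rightarrow> 'a set" where
  "coset L N x = {ladd L x n | n. n \<in> N}"

definition crep :: "('k, 'a, 'b) lsa_scheme \<Rightarrow> 'a set \<Rightarrow> 'a set \<Rightarrow> 'a" where
  "crep L N A = (SOME a. a \<in> lcarr L \<and> A = coset L N a)"

definition quot :: "('k, 'a, 'b) lsa_scheme \<Rightarrow> 'a set \<Rightarrow> ('k, 'a set) lsa" where
  "quot L N =
    \<lparr> lcarr = coset L N ` lcarr L,
      lzero = coset L N (lzero L),
      ladd = (\<lambda>A B. coset L N (ladd L (crep L N A) (crep L N B))),
      lneg = (\<lambda>A. coset L N (lneg L (crep L N A))),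
      lsmul = (\<lambda>c A. coset L N (lsmul L c (crep L N A))),
      lbr = (\<lambda>A B. coset L N (lbr L (crep L N A) (crep L N B))),
      lev = coset L N ` lev L,
      lod = coset L N ` lod L \<rparr>"

section \<open>Non-abelian tensor / exterior square by generators and relations\<close>

text \<open>The free 'k-vector space on symbols x (x) y with x, y homogeneous: finitely
  supported functions on pairs of homogeneous elements.\<close>

definition VL :: "('k::field, 'a, 'b) lsa_scheme \<Rightarrow> ('a \<times> 'a \<Rightarrow> 'k) set" where
  "VL L = {f. finite {p. f p \<noteq> 0} \<and> {p. f p \<noteq> 0} \<subseteq> lhom L \<times> lhom L}"

definition vsym :: "'a \<Rightarrow> 'a \<Rightarrow> ('a \<times> 'a \<Rightarrow> 'k::field)" where
  "vsym x y = (\<lambda>p. if p = (x, y) then 1 else 0)"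

definition vadd :: "('a \<times> 'a \<Rightarrow> 'k::field) \<Rightarrow> ('a \<times> 'a \<Rightarrow> 'k) \<Rightarrow> ('a \<times> 'a \<Rightarrow> 'k)" where
  "vadd f g = (\<lambda>p. f p + g p)"

definition vsmul :: "'k::field \<Rightarrow> ('a \<times> 'a \<Rightarrow> 'k) \<Rightarrow> ('a \<times> 'a \<Rightarrow> 'k)" where
  "vsmul c f = (\<lambda>p. c * f p)"

definition pdeg :: "('k, 'a, 'b) lsa_scheme \<Rightarrow> 'a \<times> 'a \<Rightarrow> nat" where
  "pdeg L p = (ldeg L (fst p) + ldeg L (snd p)) mod 2"

text \<open>Bracket on the span of the symbols, forced by the defining relation
  [x (x) y, x' (x) y'] = -(-1)^(|x||y|) [y,x] (x) [x',y'], extended bilinearly.\<close>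
definition vbr :: "('k::field, 'a, 'b) lsa_scheme \<Rightarrow> ('a \<times> 'a \<Rightarrow> 'k) \<Rightarrow> ('a \<times> 'a \<Rightarrow> 'k) \<Rightarrow> ('a \<times> 'a \<Rightarrow> 'k)" where
  "vbr L f g = (\<lambda>q. \<Sum>p1\<in>{p. f p \<noteq> 0}. \<Sum>p2\<in>{p. g p \<noteq> 0}.
      if q = (lbr L (snd p1) (fst p1), lbr L (fst p2) (snd p2))
      then - lsign L (fst p1) (snd p1) * f p1 * g p2 else 0)"

definition tens_rels :: "('k::field, 'a, 'b) lsa_scheme \<Rightarrow> ('a \<times> 'a \<Rightarrow> 'k) set" where
  "tens_rels L =
     \<comment> \<open>bilinearity\<close>
     {vadd (vsym (ladd L x x') y) (vsmul (-1) (vadd (vsym x y) (vsym x' y))) | x x' y.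
        ((x \<in> lev L \<and> x' \<in> lev L) \<or> (x \<in> lod L \<and> x' \<in> lod L)) \<and> y \<in> lhom L} \<union>
     {vadd (vsym y (ladd L x x')) (vsmul (-1) (vadd (vsym y x) (vsym y x'))) | x x' y.
        ((x \<in> lev L \<and> x' \<in> lev L) \<or> (x \<in> lod L \<and> x' \<in> lod L)) \<and> y \<in> lhom L} \<union>
     {vadd (vsym (lsmul L c x) y) (vsmul (- c) (vsym x y)) | c x y. x \<in> lhom L \<and> y \<in> lhom L} \<union>
     {vadd (vsym x (lsmul L c y)) (vsmul (- c) (vsym x y)) | c x y. x \<in> lhom L \<and> y \<in> lhom L} \<union>
     \<comment> \<open>[x,x'] (x) y = x (x) [x',y] - (-1)^(|x||x'|) x' (x) [x,y]\<close>
     {vadd (vsym (lbr L x x') y)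
        (vadd (vsmul (-1) (vsym x (lbr L x' y))) (vsmul (lsign L x x') (vsym x' (lbr L x y))))
        | x x' y. x \<in> lhom L \<and> x' \<in> lhom L \<and> y \<in> lhom L} \<union>
     \<comment> \<open>x (x) [y,y'] = (-1)^(|y'|(|x|+|y|)) [y',x] (x) y - (-1)^(|x||y|) [y,x] (x) y'\<close>
     {vadd (vsym x (lbr L y y'))
        (vadd (vsmul (- ((-1) ^ (ldeg L y' * (ldeg L x + ldeg L y)))) (vsym (lbr L y' x) y))
              (vsmul (lsign L x y) (vsym (lbr L y x) y')))
        | x y y'. x \<in> lhom L \<and> y \<in> lhom L \<and> y' \<in> lhom L}"

text \<open>super skew-symmetry and super Jacobi for the bracket on generators
  (these make the quotient a Lie superalgebra)\<close>
definition lsa_rels :: "('k::field, 'a, 'b) lsa_scheme \<Rightarrow> ('a \<times> 'a \<Rightarrow> 'k) set" where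
  "lsa_rels L =
     {vadd (vbr L (vsym (fst p) (snd p)) (vsym (fst q) (snd q)))
           (vsmul ((-1) ^ (pdeg L p * pdeg L q)) (vbr L (vsym (fst q) (snd q)) (vsym (fst p) (snd p))))
       | p q. p \<in> lhom L \<times> lhom L \<and> q \<in> lhom L \<times> lhom L} \<union>
     {(let a = vsym (fst p) (snd p); b = vsym (fst q) (snd q); c = vsym (fst r) (snd r) in
        vadd (vadd (vsmul ((-1) ^ (pdeg L p * pdeg L r)) (vbr L a (vbr L b c)))
                   (vsmul ((-1) ^ (pdeg L q * pdeg L p)) (vbr L b (vbr L c a))))
             (vsmul ((-1) ^ (pdeg L r * pdeg L q)) (vbr L c (vbr L a b))))
       | p q r. p \<in> lhom L \<times> lhom L \<and> q \<in> lhom L \<times> lhom L \<and> r \<in> lhom L \<times> lhom L}"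

inductive_set gen_ideal :: "('k::field, 'a, 'b) lsa_scheme \<Rightarrow> ('a \<times> 'a \<Rightarrow> 'k) set
    \<Rightarrow> ('a \<times> 'a \<Rightarrow> 'k) set" for L R where
  gen: "g \<in> R \<Longrightarrow> g \<in> gen_ideal L R"
| add: "f \<in> gen_ideal L R \<Longrightarrow> g \<in> gen_ideal L R \<Longrightarrow> vadd f g \<in> gen_ideal L R"
| smul: "f \<in> gen_ideal L R \<Longrightarrow> vsmul c f \<in> gen_ideal L R"
| brl: "f \<in> gen_ideal L R \<Longrightarrow> w \<in> VL L \<Longrightarrow> vbr L w f \<in> gen_ideal L R"
| brr: "f \<in> gen_ideal L R \<Longrightarrow> w \<in> VL L \<Longrightarrow> vbr L f w \<in> gen_ideal L R"

text \<open>L (x) L = VL L / tens_ideal L\<close>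
definition tens_ideal :: "('k::field, 'a, 'b) lsa_scheme \<Rightarrow> ('a \<times> 'a \<Rightarrow> 'k) set" where
  "tens_ideal L = gen_ideal L (tens_rels L \<union> lsa_rels L)"

text \<open>generators of L [] L: x (x) y + (-1)^(|x||y|) y (x) x and x0 (x) x0\<close>
definition box_rels :: "('k::field, 'a, 'b) lsa_scheme \<Rightarrow> ('a \<times> 'a \<Rightarrow> 'k) set" where
  "box_rels L =
     {vadd (vsym x y) (vsmul (lsign L x y) (vsym y x)) | x y. x \<in> lhom L \<and> y \<in> lhom L} \<union>
     {vsym x x | x. x \<in> lev L}"

text \<open>L /\ L = (L (x) L)/(L [] L) = VL L / wedge_ideal L\<close>
definition wedge_ideal :: "('k::field, 'a, 'b) lsa_scheme \<Rightarrow> ('a \<times> 'a \<Rightarrow> 'k) set" where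
  "wedge_ideal L = gen_ideal L (tens_rels L \<union> lsa_rels L \<union> box_rels L)"

text \<open>representative of x /\ y for arbitrary (not necessarily homogeneous) x, y, by bilinearity\<close>
definition wedge_elt :: "('k::field, 'a, 'b) lsa_scheme \<Rightarrow> 'a \<Rightarrow> 'a \<Rightarrow> ('a \<times> 'a \<Rightarrow> 'k)" where
  "wedge_elt L x y =
     vadd (vadd (vsym (comp0 L x) (comp0 L y)) (vsym (comp0 L x) (comp1 L y)))
          (vadd (vsym (comp1 L x) (comp0 L y)) (vsym (comp1 L x) (comp1 L y)))"

definition ext_center :: "('k::field, 'a, 'b) lsa_scheme \<Rightarrow> 'a set" where
  "ext_center L = {x \<in> lcarr L. \<forall>y\<in>lcarr L. wedge_elt L x y \<in> wedge_ideal L}"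

definition nat_push :: "('k::field, 'a, 'b) lsa_scheme \<Rightarrow> 'a set \<Rightarrow> ('a \<times> 'a \<Rightarrow> 'k)
    \<Rightarrow> ('a set \<times> 'a set \<Rightarrow> 'k)" where
  "nat_push L N f = (\<lambda>Q. \<Sum>p\<in>{p. f p \<noteq> 0 \<and> (coset L N (fst p), coset L N (snd p)) = Q}. f p)"

definition nat_wedge_map_mono :: "('k::field, 'a, 'b) lsa_scheme \<Rightarrow> 'a set \<Rightarrow> bool" where
  "nat_wedge_map_mono L N \<longleftrightarrow>
     (\<forall>f\<in>VL L. nat_push L N f \<in> (wedge_ideal (quot L N) :: ('a set \<times> 'a set \<Rightarrow> 'k) set)
        \<longrightarrow> f \<in> wedge_ideal L)"

end

theory Submission
  imports Defs
begin

definition supp :: "('x \<Rightarrow> 'k::field) \<Rightarrow> 'x set" where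
  "supp F = {p. F p \<noteq> 0}"

definition fs :: "'i set \<Rightarrow> ('i \<Rightarrow> 'x \<Rightarrow> 'k::field) \<Rightarrow> 'x \<Rightarrow> 'k" where
  "fs A g = (\<lambda>p. \<Sum>i\<in>A. g i p)"

definition vsymp :: "'a \<times> 'a \<Rightarrow> ('a \<times> 'a \<Rightarrow> 'k::field)" where
  "vsymp q = vsym (fst q) (snd q)"

definition push :: "('a \<times> 'a \<Rightarrow> 'c \<times> 'c) \<Rightarrow> ('a \<times> 'a \<Rightarrow> 'k::field) \<Rightarrow> ('c \<times> 'c \<Rightarrow> 'k)" where
  "push h F = fs (supp F) (\<lambda>p. vsmul (F p) (vsymp (h p)))"

lemma vsym_apply: "vsym x y p = (if p = (x, y) then 1 else 0)"
  by (simp add: vsym_def)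

lemma vsymp_apply: "vsymp q p = (if p = q then 1 else 0)"
  by (simp add: vsymp_def vsym_def)

lemma supp_vsym[simp]: "supp (vsym x y :: _ \<Rightarrow> 'k::field) = {(x, y)}"
  by (auto simp: supp_def vsym_def)

lemma supp_vsymp[simp]: "supp (vsymp q :: _ \<Rightarrow> 'k::field) = {q}"
  by (auto simp: supp_def vsymp_apply)

lemma supp_vadd: "supp (vadd f g) \<subseteq> supp f \<union> supp g"
  by (auto simp: supp_def vadd_def)

lemma supp_vsmul: "supp (vsmul c f) \<subseteq> supp f"
  by (auto simp: supp_def vsmul_def)

lemma finite_supp_vadd[intro]: "finite (supp f) \<Longrightarrow> finite (supp g) \<Longrightarrow> finite (supp (vadd f g))"
  by (rule finite_subset[OF supp_vadd]) auto

lemma finite_supp_vsmul[intro]: "finite (supp f) \<Longrightarrow> finite (supp (vsmul c f))"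
  by (rule finite_subset[OF supp_vsmul]) auto

lemma supp_fs: "supp (fs A g) \<subseteq> (\<Union>i\<in>A. supp (g i))"
  by (auto simp: supp_def fs_def elim!: sum.not_neutral_contains_not_neutral)

lemma finite_supp_fs[intro]: "finite A \<Longrightarrow> (\<And>i. i \<in> A \<Longrightarrow> finite (supp (g i))) \<Longrightarrow> finite (supp (fs A g))"
proof -
  assume a: "finite A" "\<And>i. i \<in> A \<Longrightarrow> finite (supp (g i))"
  have "finite (\<Union>i\<in>A. supp (g i))" using a by blast
  then show ?thesis using finite_subset[OF supp_fs[of A g]] by blast
qed

lemma fs_empty[simp]: "fs {} g = (\<lambda>p. 0)"
  by (simp add: fs_def)

lemma fs_insert: "finite A \<Longrightarrow> a \<notin> A \<Longrightarrow> fs (insert a A) g = vadd (g a) (fs A g)"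
  by (simp add: fs_def vadd_def)

lemma supp_zero[simp]: "supp (\<lambda>p. 0::'k::field) = {}"
  by (simp add: supp_def)

lemma expand: "finite S \<Longrightarrow> supp f \<subseteq> S \<Longrightarrow> f = fs S (\<lambda>p. vsmul (f p) (vsymp p))"
proof
  fix q assume S: "finite S" "supp f \<subseteq> S"
  have "fs S (\<lambda>p. vsmul (f p) (vsymp p)) q = (\<Sum>p\<in>S. if q = p then f p else 0)"
    by (auto simp: fs_def vsmul_def vsymp_apply intro!: sum.cong)
  also have "\<dots> = f q" using S by (auto simp: sum.delta supp_def)
  finally show "f q = fs S (\<lambda>p. vsmul (f p) (vsymp p)) q" by simp
qed

definition vbk :: "('k::field, 'a, 'b) lsa_scheme \<Rightarrow> 'a \<times> 'a \<Rightarrow> 'a \<times> 'a \<Rightarrow> 'a \<times> 'a \<Rightarrow> 'k" where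
  "vbk L p1 p2 q = (if q = (lbr L (snd p1) (fst p1), lbr L (fst p2) (snd p2)) then - lsign L (fst p1) (snd p1) else 0)"

lemma vbr_superset:
  assumes "finite S" "finite T" "supp f \<subseteq> S" "supp g \<subseteq> T"
  shows "vbr L f g q = (\<Sum>p1\<in>S. \<Sum>p2\<in>T. f p1 * g p2 * vbk L p1 p2 q)"
proof -
  have "vbr L f g q = (\<Sum>p1\<in>supp f. \<Sum>p2\<in>supp g. f p1 * g p2 * vbk L p1 p2 q)"
    by (auto simp: vbr_def supp_def vbk_def intro!: sum.cong)
  also have "\<dots> = (\<Sum>p1\<in>S. \<Sum>p2\<in>supp g. f p1 * g p2 * vbk L p1 p2 q)"
    using assms by (intro sum.mono_neutral_left) (auto simp: supp_def)
  also have "\<dots> = (\<Sum>p1\<in>S. \<Sum>p2\<in>T. f p1 * g p2 * vbk L p1 p2 q)"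
    using assms by (intro sum.cong refl sum.mono_neutral_left) (auto simp: supp_def)
  finally show ?thesis .
qed

lemma vbr_sym: "vbr L (vsym x y) (vsym x' y') = vsmul (- lsign L x y) (vsym (lbr L y x) (lbr L x' y'))"
proof
  fix q
  have "vbr L (vsym x y) (vsym x' y') q = (\<Sum>p1\<in>{(x,y)}. \<Sum>p2\<in>{(x',y')}. vsym x y p1 * vsym x' y' p2 * vbk L p1 p2 q)"
    by (rule vbr_superset) auto
  then show "vbr L (vsym x y) (vsym x' y') q = vsmul (- lsign L x y) (vsym (lbr L y x) (lbr L x' y')) q"
    by (auto simp: vbk_def vsmul_def vsym_def)
qed

lemma vbr_add_left:
  assumes "finite (supp f1)" "finite (supp f2)" "finite (supp g)"
  shows "vbr L (vadd f1 f2) g = vadd (vbr L f1 g) (vbr L f2 g)"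
proof
  fix q
  let ?S = "supp f1 \<union> supp f2"
  have s: "supp (vadd f1 f2) \<subseteq> ?S" by (rule supp_vadd)
  show "vbr L (vadd f1 f2) g q = vadd (vbr L f1 g) (vbr L f2 g) q"
    using assms s
    by (simp add: vadd_def vbr_superset[of ?S "supp g"] ring_distribs sum.distrib)
qed

lemma vbr_add_right:
  assumes "finite (supp f)" "finite (supp g1)" "finite (supp g2)"
  shows "vbr L f (vadd g1 g2) = vadd (vbr L f g1) (vbr L f g2)"
proof
  fix q
  let ?S = "supp g1 \<union> supp g2"
  have s: "supp (vadd g1 g2) \<subseteq> ?S" by (rule supp_vadd)
  show "vbr L f (vadd g1 g2) q = vadd (vbr L f g1) (vbr L f g2) q"
    using assms s
    by (simp add: vadd_def vbr_superset[of "supp f" ?S] ring_distribs sum.distrib)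
qed

lemma vbr_smul_left:
  assumes "finite (supp f)" "finite (supp g)"
  shows "vbr L (vsmul c f) g = vsmul c (vbr L f g)"
proof
  fix q
  show "vbr L (vsmul c f) g q = vsmul c (vbr L f g) q"
    using assms supp_vsmul[of c f]
    by (simp add: vsmul_def vbr_superset[of "supp f" "supp g"] sum_distrib_left mult.assoc)
qed

lemma vbr_smul_right:
  assumes "finite (supp f)" "finite (supp g)"
  shows "vbr L f (vsmul c g) = vsmul c (vbr L f g)"
proof
  fix q
  show "vbr L f (vsmul c g) q = vsmul c (vbr L f g) q"
    using assms supp_vsmul[of c g]
    by (simp add: vsmul_def vbr_superset[of "supp f" "supp g"] sum_distrib_left algebra_simps)
qed

lemma vbr_zero_left: "vbr L (\<lambda>p. 0) g = (\<lambda>p. 0)"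
  by (simp add: vbr_def)

lemma vbr_zero_right: "vbr L f (\<lambda>p. 0) = (\<lambda>p. 0)"
  by (simp add: vbr_def)

definition brimg :: "('k::field, 'a, 'b) lsa_scheme \<Rightarrow> ('a \<times> 'a) \<times> ('a \<times> 'a) \<Rightarrow> 'a \<times> 'a" where
  "brimg L pp = (lbr L (snd (fst pp)) (fst (fst pp)), lbr L (fst (snd pp)) (snd (snd pp)))"

lemma supp_vbr: 
  assumes "finite (supp f)" "finite (supp g)"
  shows "supp (vbr L f g) \<subseteq> brimg L ` (supp f \<times> supp g)"
proof
  fix q assume "q \<in> supp (vbr L f g)"
  moreover have "vbr L f g q = (\<Sum>p1\<in>supp f. \<Sum>p2\<in>supp g. f p1 * g p2 * vbk L p1 p2 q)"
    by (rule vbr_superset[OF assms subset_refl subset_refl])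
  ultimately have "(\<Sum>p1\<in>supp f. \<Sum>p2\<in>supp g. f p1 * g p2 * vbk L p1 p2 q) \<noteq> 0"
    by (simp add: supp_def)
  then obtain p1 p2 where "p1 \<in> supp f" "p2 \<in> supp g" "f p1 * g p2 * vbk L p1 p2 q \<noteq> 0"
    by (meson sum.not_neutral_contains_not_neutral)
  then show "q \<in> brimg L ` (supp f \<times> supp g)"
    by (intro image_eqI[of _ _ "(p1,p2)"]) (auto simp: vbk_def brimg_def split: if_splits)
qed

lemma finite_supp_vbr[intro]: "finite (supp f) \<Longrightarrow> finite (supp g) \<Longrightarrow> finite (supp (vbr L f g))"
proof -
  assume a: "finite (supp f)" "finite (supp g)"
  have "finite (brimg L ` (supp f \<times> supp g))" using a by simp
  then show ?thesis using supp_vbr[OF a] by (rule finite_subset[rotated])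
qed

lemma vbr_fs_left:
  assumes "finite A" "\<And>i. i \<in> A \<Longrightarrow> finite (supp (g i))" "finite (supp h)"
  shows "vbr L (fs A g) h = fs A (\<lambda>i. vbr L (g i) h)"
  using assms
proof (induction A rule: finite_induct)
  case empty then show ?case by (simp add: vbr_zero_left)
next
  case (insert a A)
  then show ?case by (simp add: fs_insert vbr_add_left finite_supp_fs)
qed

lemma vbr_fs_right:
  assumes "finite A" "\<And>i. i \<in> A \<Longrightarrow> finite (supp (g i))" "finite (supp h)"
  shows "vbr L h (fs A g) = fs A (\<lambda>i. vbr L h (g i))"
  using assms
proof (induction A rule: finite_induct)
  case empty then show ?case by (simp add: vbr_zero_right)
next
  case (insert a A)
  then show ?case by (simp add: fs_insert vbr_add_right finite_supp_fs)
qed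

lemma vsmul_zero_fun[simp]: "vsmul 0 f = (\<lambda>p. 0)"
  by (simp add: vsmul_def)

lemma push_superset:
  assumes "finite S" "supp F \<subseteq> S"
  shows "push h F = fs S (\<lambda>p. vsmul (F p) (vsymp (h p)))"
  unfolding push_def fs_def
proof
  fix q
  show "(\<Sum>i\<in>supp F. vsmul (F i) (vsymp (h i)) q) = (\<Sum>i\<in>S. vsmul (F i) (vsymp (h i)) q)"
    using assms by (intro sum.mono_neutral_left) (auto simp: supp_def vsmul_def)
qed

lemma push_add:
  assumes "finite (supp F)" "finite (supp G)"
  shows "push h (vadd F G) = vadd (push h F) (push h G)"
proof -
  let ?S = "supp F \<union> supp G"
  have "push h (vadd F G) = fs ?S (\<lambda>p. vsmul (vadd F G p) (vsymp (h p)))"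
    using assms supp_vadd by (intro push_superset) auto
  moreover have "push h F = fs ?S (\<lambda>p. vsmul (F p) (vsymp (h p)))"
    using assms by (intro push_superset) auto
  moreover have "push h G = fs ?S (\<lambda>p. vsmul (G p) (vsymp (h p)))"
    using assms by (intro push_superset) auto
  ultimately show ?thesis
    by (auto simp: fs_def vadd_def vsmul_def ring_distribs sum.distrib)
qed

lemma push_smul:
  assumes "finite (supp F)"
  shows "push h (vsmul c F) = vsmul c (push h F)"
proof -
  have "push h (vsmul c F) = fs (supp F) (\<lambda>p. vsmul (vsmul c F p) (vsymp (h p)))"
    using assms supp_vsmul by (intro push_superset) auto
  then show ?thesis
    by (auto simp: push_def fs_def vsmul_def sum_distrib_left mult.assoc)
qed

lemma push_vsym: "push h (vsym x y :: _ \<Rightarrow> 'k::field) = vsymp (h (x, y))"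
proof -
  have "push h (vsym x y :: _ \<Rightarrow> 'k::field) = fs {(x,y)} (\<lambda>p. vsmul (vsym x y p) (vsymp (h p)))"
    by (rule push_superset) auto
  then show ?thesis by (auto simp: fs_def vsmul_def vsym_def)
qed

lemma push_zero[simp]: "push h (\<lambda>p. 0::'k::field) = (\<lambda>p. 0)"
  by (simp add: push_def)

lemma push_fs:
  assumes "finite A" "\<And>i. i \<in> A \<Longrightarrow> finite (supp (g i))"
  shows "push h (fs A g) = fs A (\<lambda>i. push h (g i))"
  using assms
proof (induction A rule: finite_induct)
  case empty then show ?case by simp
next
  case (insert a A)
  then show ?case by (simp add: fs_insert push_add finite_supp_fs)
qed

lemma supp_push: "supp (push h F) \<subseteq> h ` supp F"
proof
  fix q assume "q \<in> supp (push h F)"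
  then have "(\<Sum>p\<in>supp F. vsmul (F p) (vsymp (h p)) q) \<noteq> 0" by (simp add: supp_def push_def fs_def)
  then obtain p where "p \<in> supp F" "vsmul (F p) (vsymp (h p)) q \<noteq> 0"
    by (meson sum.not_neutral_contains_not_neutral)
  then show "q \<in> h ` supp F" by (auto simp: vsmul_def vsymp_apply split: if_splits)
qed

lemma finite_supp_push[intro]: "finite (supp F) \<Longrightarrow> finite (supp (push h F))"
  by (meson finite_imageI finite_subset supp_push)

definition fsub :: "('x \<Rightarrow> 'k::field) \<Rightarrow> ('x \<Rightarrow> 'k) \<Rightarrow> 'x \<Rightarrow> 'k" where
  "fsub F G = (\<lambda>p. F p - G p)"

lemma gi_zero: "g \<in> gen_ideal L R \<Longrightarrow> (\<lambda>p. 0) \<in> gen_ideal L R"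
  using gen_ideal.smul[of g L R 0] by simp

lemma gi_lin: "F \<in> gen_ideal L R \<Longrightarrow> G \<in> gen_ideal L R \<Longrightarrow> (\<lambda>p. a * F p + b * G p) \<in> gen_ideal L R"
  using gen_ideal.add[OF gen_ideal.smul[of F L R a] gen_ideal.smul[of G L R b]]
  by (simp add: vadd_def vsmul_def)

lemma gi_sub: "F \<in> gen_ideal L R \<Longrightarrow> G \<in> gen_ideal L R \<Longrightarrow> fsub F G \<in> gen_ideal L R"
  using gi_lin[of F L R G 1 "-1"] by (simp add: fsub_def)

lemma gi_from_sub: "fsub F G \<in> gen_ideal L R \<Longrightarrow> G \<in> gen_ideal L R \<Longrightarrow> F \<in> gen_ideal L R"
  using gi_lin[of "fsub F G" L R G 1 1] by (simp add: fsub_def)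

lemma gi_smul': "F \<in> gen_ideal L R \<Longrightarrow> (\<lambda>p. a * F p) \<in> gen_ideal L R"
  using gen_ideal.smul[of F L R a] by (simp add: vsmul_def)

lemma gi_fs:
  assumes "(\<lambda>p. 0) \<in> gen_ideal L R" "finite A" "\<And>i. i \<in> A \<Longrightarrow> g i \<in> gen_ideal L R"
  shows "fs A g \<in> gen_ideal L R"
  using assms(2,3)
proof (induction A rule: finite_induct)
  case empty then show ?case using assms(1) by simp
next
  case (insert a A)
  then show ?case by (simp add: fs_insert gen_ideal.add)
qed

locale LS =
  fixes L :: "('k::field, 'a) lsa" and N :: "'a set"
  assumes L: "is_lsa L" and gi: "graded_ideal L N"
begin

abbreviation "C \<equiv> lcarr L"
abbreviation "Ev \<equiv> lev L"
abbreviation "Od \<equiv> lod L"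
abbreviation "z \<equiv> lzero L"
abbreviation pl (infixl "\<oplus>" 65) where "pl x y \<equiv> ladd L x y"
abbreviation "ng \<equiv> lneg L"
abbreviation "sm \<equiv> lsmul L"
abbreviation "br \<equiv> lbr L"
abbreviation "sb \<equiv> lsub L"

lemmas ax_z = L[unfolded is_lsa_def, THEN conjunct1]
lemmas ax_add = L[unfolded is_lsa_def, THEN conjunct2, THEN conjunct1]
lemmas ax_neg = L[unfolded is_lsa_def, THEN conjunct2, THEN conjunct2, THEN conjunct1]
lemmas ax_sm = L[unfolded is_lsa_def, THEN conjunct2, THEN conjunct2, THEN conjunct2, THEN conjunct1]
lemmas ax_assoc = L[unfolded is_lsa_def, THEN conjunct2, THEN conjunct2, THEN conjunct2, THEN conjunct2, THEN conjunct1]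
lemmas ax_comm = L[unfolded is_lsa_def, THEN conjunct2, THEN conjunct2, THEN conjunct2, THEN conjunct2, THEN conjunct2, THEN conjunct1]
lemmas ax_add0 = L[unfolded is_lsa_def, THEN conjunct2, THEN conjunct2, THEN conjunct2, THEN conjunct2, THEN conjunct2, THEN conjunct2, THEN conjunct1]
lemmas ax_addneg = L[unfolded is_lsa_def, THEN conjunct2, THEN conjunct2, THEN conjunct2, THEN conjunct2, THEN conjunct2, THEN conjunct2, THEN conjunct2, THEN conjunct1]
lemmas ax_smadd = L[unfolded is_lsa_def, THEN conjunct2, THEN conjunct2, THEN conjunct2, THEN conjunct2, THEN conjunct2, THEN conjunct2, THEN conjunct2, THEN conjunct2, THEN conjunct1]
lemmas ax_addsm = L[unfolded is_lsa_def, THEN conjunct2, THEN conjunct2, THEN conjunct2, THEN conjunct2, THEN conjunct2, THEN conjunct2, THEN conjunct2, THEN conjunct2, THEN conjunct2, THEN conjunct1]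
lemmas ax_smsm = L[unfolded is_lsa_def, THEN conjunct2, THEN conjunct2, THEN conjunct2, THEN conjunct2, THEN conjunct2, THEN conjunct2, THEN conjunct2, THEN conjunct2, THEN conjunct2, THEN conjunct2, THEN conjunct1]
lemmas ax_sm1 = L[unfolded is_lsa_def, THEN conjunct2, THEN conjunct2, THEN conjunct2, THEN conjunct2, THEN conjunct2, THEN conjunct2, THEN conjunct2, THEN conjunct2, THEN conjunct2, THEN conjunct2, THEN conjunct2, THEN conjunct1]
lemmas ax_ev = L[unfolded is_lsa_def, THEN conjunct2, THEN conjunct2, THEN conjunct2, THEN conjunct2, THEN conjunct2, THEN conjunct2, THEN conjunct2, THEN conjunct2, THEN conjunct2, THEN conjunct2, THEN conjunct2, THEN conjunct2, THEN conjunct1]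
lemmas ax_od = L[unfolded is_lsa_def, THEN conjunct2, THEN conjunct2, THEN conjunct2, THEN conjunct2, THEN conjunct2, THEN conjunct2, THEN conjunct2, THEN conjunct2, THEN conjunct2, THEN conjunct2, THEN conjunct2, THEN conjunct2, THEN conjunct2, THEN conjunct1]
lemmas ax_evod = L[unfolded is_lsa_def, THEN conjunct2, THEN conjunct2, THEN conjunct2, THEN conjunct2, THEN conjunct2, THEN conjunct2, THEN conjunct2, THEN conjunct2, THEN conjunct2, THEN conjunct2, THEN conjunct2, THEN conjunct2, THEN conjunct2, THEN conjunct2, THEN conjunct1]
lemmas ax_decomp = L[unfolded is_lsa_def, THEN conjunct2, THEN conjunct2, THEN conjunct2, THEN conjunct2, THEN conjunct2, THEN conjunct2, THEN conjunct2, THEN conjunct2, THEN conjunct2, THEN conjunct2, THEN conjunct2, THEN conjunct2, THEN conjunct2, THEN conjunct2, THEN conjunct2, THEN conjunct1]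
lemmas ax_brc = L[unfolded is_lsa_def, THEN conjunct2, THEN conjunct2, THEN conjunct2, THEN conjunct2, THEN conjunct2, THEN conjunct2, THEN conjunct2, THEN conjunct2, THEN conjunct2, THEN conjunct2, THEN conjunct2, THEN conjunct2, THEN conjunct2, THEN conjunct2, THEN conjunct2, THEN conjunct2, THEN conjunct1]
lemmas ax_bradd = L[unfolded is_lsa_def, THEN conjunct2, THEN conjunct2, THEN conjunct2, THEN conjunct2, THEN conjunct2, THEN conjunct2, THEN conjunct2, THEN conjunct2, THEN conjunct2, THEN conjunct2, THEN conjunct2, THEN conjunct2, THEN conjunct2, THEN conjunct2, THEN conjunct2, THEN conjunct2, THEN conjunct2, THEN conjunct1]
lemmas ax_brsm = L[unfolded is_lsa_def, THEN conjunct2, THEN conjunct2, THEN conjunct2, THEN conjunct2, THEN conjunct2, THEN conjunct2, THEN conjunct2, THEN conjunct2, THEN conjunct2, THEN conjunct2, THEN conjunct2, THEN conjunct2, THEN conjunct2, THEN conjunct2, THEN conjunct2, THEN conjunct2, THEN conjunct2, THEN conjunct2, THEN conjunct1]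
lemmas ax_evev = L[unfolded is_lsa_def, THEN conjunct2, THEN conjunct2, THEN conjunct2, THEN conjunct2, THEN conjunct2, THEN conjunct2, THEN conjunct2, THEN conjunct2, THEN conjunct2, THEN conjunct2, THEN conjunct2, THEN conjunct2, THEN conjunct2, THEN conjunct2, THEN conjunct2, THEN conjunct2, THEN conjunct2, THEN conjunct2, THEN conjunct2, THEN conjunct1]
lemmas ax_evodb = L[unfolded is_lsa_def, THEN conjunct2, THEN conjunct2, THEN conjunct2, THEN conjunct2, THEN conjunct2, THEN conjunct2, THEN conjunct2, THEN conjunct2, THEN conjunct2, THEN conjunct2, THEN conjunct2, THEN conjunct2, THEN conjunct2, THEN conjunct2, THEN conjunct2, THEN conjunct2, THEN conjunct2, THEN conjunct2, THEN conjunct2, THEN conjunct2, THEN conjunct1]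
lemmas ax_odod = L[unfolded is_lsa_def, THEN conjunct2, THEN conjunct2, THEN conjunct2, THEN conjunct2, THEN conjunct2, THEN conjunct2, THEN conjunct2, THEN conjunct2, THEN conjunct2, THEN conjunct2, THEN conjunct2, THEN conjunct2, THEN conjunct2, THEN conjunct2, THEN conjunct2, THEN conjunct2, THEN conjunct2, THEN conjunct2, THEN conjunct2, THEN conjunct2, THEN conjunct2, THEN conjunct1]
lemmas ax_skew = L[unfolded is_lsa_def, THEN conjunct2, THEN conjunct2, THEN conjunct2, THEN conjunct2, THEN conjunct2, THEN conjunct2, THEN conjunct2, THEN conjunct2, THEN conjunct2, THEN conjunct2, THEN conjunct2, THEN conjunct2, THEN conjunct2, THEN conjunct2, THEN conjunct2, THEN conjunct2, THEN conjunct2, THEN conjunct2, THEN conjunct2, THEN conjunct2, THEN conjunct2, THEN conjunct2, THEN conjunct1]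

lemma z_c[simp]: "z \<in> C" using ax_z by blast
lemma add_c[simp]: "x \<in> C \<Longrightarrow> y \<in> C \<Longrightarrow> x \<oplus> y \<in> C" using ax_add by blast
lemma neg_c[simp]: "x \<in> C \<Longrightarrow> ng x \<in> C" using ax_neg by blast
lemma sm_c[simp]: "x \<in> C \<Longrightarrow> sm c x \<in> C" using ax_sm by blast
lemma br_c[simp]: "x \<in> C \<Longrightarrow> y \<in> C \<Longrightarrow> br x y \<in> C" using ax_brc by blast
lemma add_assoc: "x \<in> C \<Longrightarrow> y \<in> C \<Longrightarrow> w \<in> C \<Longrightarrow> (x \<oplus> y) \<oplus> w = x \<oplus> (y \<oplus> w)"
  using ax_assoc by blast
lemma add_comm: "x \<in> C \<Longrightarrow> y \<in> C \<Longrightarrow> x \<oplus> y = y \<oplus> x" using ax_comm by blast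
lemma add_0[simp]: "x \<in> C \<Longrightarrow> x \<oplus> z = x" using ax_add0 by blast
lemma add_neg[simp]: "x \<in> C \<Longrightarrow> x \<oplus> ng x = z" using ax_addneg by blast
lemma sm_add: "x \<in> C \<Longrightarrow> y \<in> C \<Longrightarrow> sm a (x \<oplus> y) = sm a x \<oplus> sm a y" using ax_smadd by blast
lemma add_sm: "x \<in> C \<Longrightarrow> sm (a + b) x = sm a x \<oplus> sm b x" using ax_addsm by blast
lemma sm_sm: "x \<in> C \<Longrightarrow> sm (a * b) x = sm a (sm b x)" using ax_smsm by blast
lemma sm_1[simp]: "x \<in> C \<Longrightarrow> sm 1 x = x" using ax_sm1 by blast
lemma ev_sub: "subspace_of L Ev" using ax_ev by blast
lemma od_sub: "subspace_of L Od" using ax_od by blast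
lemma evod: "Ev \<inter> Od = {z}" using ax_evod by blast
lemma decomp: "x \<in> C \<Longrightarrow> \<exists>a\<in>Ev. \<exists>b\<in>Od. x = a \<oplus> b" using ax_decomp by blast
lemma br_add_l: "x \<in> C \<Longrightarrow> y \<in> C \<Longrightarrow> w \<in> C \<Longrightarrow> br (x \<oplus> y) w = br x w \<oplus> br y w"
  using ax_bradd by blast
lemma br_add_r: "x \<in> C \<Longrightarrow> y \<in> C \<Longrightarrow> w \<in> C \<Longrightarrow> br w (x \<oplus> y) = br w x \<oplus> br w y"
  using ax_bradd by blast
lemma br_sm_l: "x \<in> C \<Longrightarrow> y \<in> C \<Longrightarrow> br (sm c x) y = sm c (br x y)"
  using ax_brsm by blast
lemma br_sm_r: "x \<in> C \<Longrightarrow> y \<in> C \<Longrightarrow> br x (sm c y) = sm c (br x y)"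
  using ax_brsm by blast
lemma br_evev: "x \<in> Ev \<Longrightarrow> y \<in> Ev \<Longrightarrow> br x y \<in> Ev" using ax_evev by blast
lemma br_evod: "x \<in> Ev \<Longrightarrow> y \<in> Od \<Longrightarrow> br x y \<in> Od \<and> br y x \<in> Od" using ax_evodb by blast
lemma br_odod: "x \<in> Od \<Longrightarrow> y \<in> Od \<Longrightarrow> br x y \<in> Ev" using ax_odod by blast
lemma skew: "x \<in> lhom L \<Longrightarrow> y \<in> lhom L \<Longrightarrow> br x y = ng (sm (lsign L x y) (br y x))"
  using ax_skew by blast

lemma sub_carr: "subspace_of L S \<Longrightarrow> S \<subseteq> C" by (simp add: subspace_of_def)
lemma ev_c[simp]: "x \<in> Ev \<Longrightarrow> x \<in> C" using ev_sub sub_carr by blast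
lemma od_c[simp]: "x \<in> Od \<Longrightarrow> x \<in> C" using od_sub sub_carr by blast
lemma hom_c[simp]: "x \<in> lhom L \<Longrightarrow> x \<in> C" by (auto simp: lhom_def)

lemma add_lcomm: "x \<in> C \<Longrightarrow> y \<in> C \<Longrightarrow> w \<in> C \<Longrightarrow> x \<oplus> (y \<oplus> w) = y \<oplus> (x \<oplus> w)"
  by (simp add: add_assoc[symmetric] add_comm[of x y])
lemmas add_ac = add_assoc add_comm add_lcomm

lemma add_0l[simp]: "x \<in> C \<Longrightarrow> z \<oplus> x = x" by (simp add: add_comm[of z x])
lemma add_negl[simp]: "x \<in> C \<Longrightarrow> ng x \<oplus> x = z" by (simp add: add_comm[of "ng x" x])
lemma add_neg_cancel[simp]: "x \<in> C \<Longrightarrow> y \<in> C \<Longrightarrow> x \<oplus> (ng x \<oplus> y) = y"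
  by (simp add: add_assoc[symmetric])
lemma add_neg_cancel2[simp]: "x \<in> C \<Longrightarrow> y \<in> C \<Longrightarrow> ng x \<oplus> (x \<oplus> y) = y"
  by (simp add: add_assoc[symmetric])

lemma add_cancel: "x \<in> C \<Longrightarrow> y \<in> C \<Longrightarrow> x \<oplus> y = x \<Longrightarrow> y = z"
proof -
  assume a: "x \<in> C" "y \<in> C" "x \<oplus> y = x"
  have "y = ng x \<oplus> (x \<oplus> y)" using a(1,2) by simp
  also have "\<dots> = ng x \<oplus> x" by (simp only: a(3))
  also have "\<dots> = z" using a by simp
  finally show "y = z" .
qed

lemma neg_unique: "x \<in> C \<Longrightarrow> y \<in> C \<Longrightarrow> x \<oplus> y = z \<Longrightarrow> y = ng x"
proof -
  assume a: "x \<in> C" "y \<in> C" "x \<oplus> y = z"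
  have "y = ng x \<oplus> (x \<oplus> y)" using a(1,2) by simp
  also have "\<dots> = ng x \<oplus> z" by (simp only: a(3))
  also have "\<dots> = ng x" using a by simp
  finally show "y = ng x" .
qed

lemma sm0[simp]: "x \<in> C \<Longrightarrow> sm 0 x = z"
proof -
  assume x: "x \<in> C"
  have "sm 0 x \<oplus> sm 0 x = sm 0 x" using add_sm[OF x, of 0 0] by simp
  then show ?thesis using add_cancel[of "sm 0 x" "sm 0 x"] x by simp
qed

lemma ng_sm: "x \<in> C \<Longrightarrow> ng x = sm (-1) x"
proof -
  assume x: "x \<in> C"
  have "x \<oplus> sm (-1) x = z" using add_sm[OF x, of 1 "-1"] x by simp
  then show ?thesis using neg_unique x by (metis sm_c)
qed

lemma sm_z[simp]: "sm c z = z"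
proof -
  have "sm c z = sm c (sm 0 z)" by simp
  also have "\<dots> = sm (c * 0) z" by (simp only: sm_sm z_c)
  finally show ?thesis by simp
qed
lemma ng_z[simp]: "ng z = z" by (simp add: ng_sm)
lemma ng_add: "x \<in> C \<Longrightarrow> y \<in> C \<Longrightarrow> ng (x \<oplus> y) = ng x \<oplus> ng y"
  by (simp add: ng_sm sm_add)
lemma ng_ng[simp]: "x \<in> C \<Longrightarrow> ng (ng x) = x"
  by (simp add: ng_sm sm_sm[symmetric])
lemma sm_ng: "x \<in> C \<Longrightarrow> sm c (ng x) = ng (sm c x)"
  by (simp add: ng_sm sm_sm[symmetric] mult.commute)
lemma sb_def': "sb x y = x \<oplus> ng y" by (simp add: lsub_def)

lemma br_z_l[simp]: "y \<in> C \<Longrightarrow> br z y = z" using br_sm_l[of z y 0] by simp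
lemma br_z_r[simp]: "y \<in> C \<Longrightarrow> br y z = z" using br_sm_r[of y z 0] by simp
lemma br_ng_l: "x \<in> C \<Longrightarrow> y \<in> C \<Longrightarrow> br (ng x) y = ng (br x y)" by (simp add: ng_sm br_sm_l)
lemma br_ng_r: "x \<in> C \<Longrightarrow> y \<in> C \<Longrightarrow> br x (ng y) = ng (br x y)" by (simp add: ng_sm br_sm_r)

lemma sub_z: "subspace_of L S \<Longrightarrow> z \<in> S" by (simp add: subspace_of_def)
lemma sub_add: "subspace_of L S \<Longrightarrow> x \<in> S \<Longrightarrow> y \<in> S \<Longrightarrow> x \<oplus> y \<in> S" by (simp add: subspace_of_def)
lemma sub_sm: "subspace_of L S \<Longrightarrow> x \<in> S \<Longrightarrow> sm c x \<in> S" by (simp add: subspace_of_def)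
lemma sub_ng: "subspace_of L S \<Longrightarrow> x \<in> S \<Longrightarrow> ng x \<in> S"
  using ng_sm[of x] sub_sm[of S x "-1"] sub_carr[of S] by auto
lemma sub_sb: "subspace_of L S \<Longrightarrow> x \<in> S \<Longrightarrow> y \<in> S \<Longrightarrow> sb x y \<in> S"
  by (simp add: sb_def' sub_add sub_ng)

lemma N_sub: "subspace_of L N" using gi by (simp add: graded_ideal_def)
lemma N_c[simp]: "x \<in> N \<Longrightarrow> x \<in> C" using N_sub sub_carr by blast
lemma N_comp0: "x \<in> N \<Longrightarrow> comp0 L x \<in> N" using gi by (simp add: graded_ideal_def)
lemma N_br: "x \<in> C \<Longrightarrow> n \<in> N \<Longrightarrow> br x n \<in> N" using gi by (simp add: graded_ideal_def)

lemma sb_c[simp]: "x \<in> C \<Longrightarrow> y \<in> C \<Longrightarrow> sb x y \<in> C" by (simp add: sb_def')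

lemma sb_sb_cancel: "x \<in> C \<Longrightarrow> a \<in> C \<Longrightarrow> b \<in> C \<Longrightarrow> sb (sb x b) (sb x a) = sb a b"
  by (simp add: sb_def' ng_add add_comm[of x "ng b"] add_assoc add_comm[of a "ng b"])

lemma sb_eq_z: "x \<in> C \<Longrightarrow> y \<in> C \<Longrightarrow> sb x y = z \<Longrightarrow> x = y"
proof -
  assume a: "x \<in> C" "y \<in> C" "sb x y = z"
  then have "ng y = ng x" using neg_unique[of x "ng y"] by (simp add: sb_def')
  then have "ng (ng y) = ng (ng x)" by simp
  then show "x = y" using a by simp
qed

lemma comp0_eq:
  assumes x: "x \<in> C" and a: "a \<in> Ev" "sb x a \<in> Od"
  shows "comp0 L x = a"
  unfolding comp0_def
proof (rule the_equality)
  show "a \<in> Ev \<and> sb x a \<in> Od" using a by simp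
next
  fix b assume b: "b \<in> Ev \<and> sb x b \<in> Od"
  have "sb (sb x b) (sb x a) = sb a b"
    using x a b by (simp add: sb_sb_cancel)
  then have "sb a b \<in> Od" using b a sub_sb[OF od_sub] by metis
  moreover have "sb a b \<in> Ev" using b a sub_sb[OF ev_sub] by metis
  ultimately have "sb a b = z" using evod by blast
  then show "b = a" using a b sb_eq_z[of a b] by simp
qed

lemma sb_self[simp]: "x \<in> C \<Longrightarrow> sb x x = z" by (simp add: sb_def')
lemma sb_z[simp]: "x \<in> C \<Longrightarrow> sb x z = x" by (simp add: sb_def')
lemma I1: "a \<in> C \<Longrightarrow> a' \<in> C \<Longrightarrow> sb (sb a a') a = ng a'"
  by (simp add: sb_def' add_comm[of a "ng a'"] add_assoc)
lemma I2: "a \<in> C \<Longrightarrow> a' \<in> C \<Longrightarrow> sb a (sb a a') = a'"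
  by (simp add: sb_def' ng_add)
lemma I3: "a \<in> C \<Longrightarrow> a' \<in> C \<Longrightarrow> sb a a' \<oplus> a' = a"
  by (simp add: sb_def' add_assoc)
lemma I4: "a \<in> C \<Longrightarrow> b \<in> C \<Longrightarrow> sb (a \<oplus> b) a = b"
  by (simp add: sb_def' add_comm[of "a \<oplus> b" "ng a"])
lemma I5: "a \<in> C \<Longrightarrow> a' \<in> C \<Longrightarrow> a' \<oplus> sb a a' = a"
  by (simp add: sb_def' add_comm[of a "ng a'"])
lemma I6: "a \<in> C \<Longrightarrow> b \<in> C \<Longrightarrow> ng (sb a b) = sb b a"
  by (simp add: sb_def' ng_add add_comm)

lemma comp0_ev: "x \<in> Ev \<Longrightarrow> comp0 L x = x"
  by (rule comp0_eq) (auto simp: sub_z[OF od_sub])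
lemma comp1_ev: "x \<in> Ev \<Longrightarrow> comp1 L x = z"
  by (simp add: comp1_def comp0_ev)
lemma comp0_od: "x \<in> Od \<Longrightarrow> comp0 L x = z"
  by (rule comp0_eq) (auto simp: sub_z[OF ev_sub])
lemma comp1_od: "x \<in> Od \<Longrightarrow> comp1 L x = x"
  by (simp add: comp1_def comp0_od)

lemma comp_decomp: assumes x: "x \<in> C"
  shows "comp0 L x \<in> Ev \<and> comp1 L x \<in> Od \<and> x = comp0 L x \<oplus> comp1 L x"
proof -
  obtain a b where ab: "a \<in> Ev" "b \<in> Od" "x = a \<oplus> b" using decomp[OF x] by blast
  have "sb x a = b" using ab by (simp add: I4)
  then have c0: "comp0 L x = a" using comp0_eq[OF x ab(1)] ab by simp
  then have "comp1 L x = b" using \<open>sb x a = b\<close> by (simp add: comp1_def)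
  then show ?thesis using ab c0 by simp
qed

lemma N_z: "z \<in> N" using sub_z[OF N_sub] .
lemma N_add: "x \<in> N \<Longrightarrow> y \<in> N \<Longrightarrow> x \<oplus> y \<in> N" using sub_add[OF N_sub] .
lemma N_sm: "x \<in> N \<Longrightarrow> sm c x \<in> N" using sub_sm[OF N_sub] .
lemma N_ng: "x \<in> N \<Longrightarrow> ng x \<in> N" using sub_ng[OF N_sub] .
lemma N_sb: "x \<in> N \<Longrightarrow> y \<in> N \<Longrightarrow> sb x y \<in> N" using sub_sb[OF N_sub] .

lemma N_comp1: "x \<in> N \<Longrightarrow> comp1 L x \<in> N"
  by (simp add: comp1_def N_sb N_comp0)

lemma lhom_iff: "x \<in> lhom L \<longleftrightarrow> x \<in> Ev \<or> x \<in> Od" by (simp add: lhom_def)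

lemma br_hom: "x \<in> lhom L \<Longrightarrow> y \<in> lhom L \<Longrightarrow> br x y \<in> lhom L"
  using br_evev br_evod br_odod by (auto simp: lhom_iff)

lemma br_hom_N: "n \<in> N \<Longrightarrow> n \<in> lhom L \<Longrightarrow> y \<in> lhom L \<Longrightarrow> br n y \<in> N"
proof -
  assume a: "n \<in> N" "n \<in> lhom L" "y \<in> lhom L"
  have "br n y = ng (sm (lsign L n y) (br y n))" using skew a by blast
  then show ?thesis using a by (simp add: N_ng N_sm N_br)
qed

lemma br_N_l: assumes n: "n \<in> N" and y: "y \<in> C" shows "br n y \<in> N"
proof -
  obtain a b where ab: "a \<in> Ev" "b \<in> Od" "y = a \<oplus> b" using decomp[OF y] by blast
  have h: "br m y \<in> N" if m: "m \<in> N" "m \<in> lhom L" for m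
  proof -
    have "br m y = br m a \<oplus> br m b" using ab m by (simp add: br_add_r)
    moreover have "br m a \<in> N" "br m b \<in> N" using ab m br_hom_N by (auto simp: lhom_iff)
    ultimately show ?thesis by (simp add: N_add)
  qed
  have d: "comp0 L n \<in> Ev" "comp1 L n \<in> Od" "n = comp0 L n \<oplus> comp1 L n"
    using comp_decomp[of n] n by auto
  have "br n y = br (comp0 L n) y \<oplus> br (comp1 L n) y"
    using d y by (metis br_add_l ev_c od_c)
  moreover have "br (comp0 L n) y \<in> N" "br (comp1 L n) y \<in> N"
    using h d n N_comp0 N_comp1 by (auto simp: lhom_iff)
  ultimately show ?thesis by (simp add: N_add)
qed

definition sp :: "'a \<Rightarrow> 'a \<Rightarrow> bool" where
  "sp a b \<longleftrightarrow> (a \<in> Ev \<and> b \<in> Ev) \<or> (a \<in> Od \<and> b \<in> Od)"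

lemma hom_diff:
  assumes a: "a \<in> lhom L" "a' \<in> lhom L" and n: "sb a a' \<in> N"
  shows "(sp a a' \<and> sp a' (sb a a')) \<or> (a \<in> N \<and> a' \<in> N)"
proof (cases "sp a a'")
  case True
  then show ?thesis unfolding sp_def using sub_sb[OF ev_sub] sub_sb[OF od_sub]
    by auto
next
  case False
  then have "(a \<in> Ev \<and> a' \<in> Od) \<or> (a \<in> Od \<and> a' \<in> Ev)" using a by (auto simp: sp_def lhom_iff)
  then show ?thesis
  proof
    assume h: "a \<in> Ev \<and> a' \<in> Od"
    have "sb (sb a a') a = ng a'" using h by (simp add: I1)
    then have "comp0 L (sb a a') = a" using h comp0_eq[of "sb a a'" a] sub_ng[OF od_sub] by simp
    then have "a \<in> N" using N_comp0[OF n] by simp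
    moreover have "a' \<in> N" using N_sb[OF \<open>a \<in> N\<close> n] h by (simp add: I2)
    ultimately show ?thesis by simp
  next
    assume h: "a \<in> Od \<and> a' \<in> Ev"
    have "sb (sb a a') (ng a') = a" using h by (simp add: sb_def' add_assoc)
    then have "comp0 L (sb a a') = ng a'" using h comp0_eq[of "sb a a'" "ng a'"] sub_ng[OF ev_sub] by simp
    then have "ng a' \<in> N" using N_comp0[OF n] by simp
    then have "a' \<in> N" using N_ng[of "ng a'"] h by simp
    moreover have "a \<in> N"
    proof -
      have e: "sb a a' \<oplus> a' = a" using I3[of a a'] h by simp
      show ?thesis using N_add[OF n \<open>a' \<in> N\<close>] unfolding e .
    qed
    ultimately show ?thesis by simp
  qed
qed

abbreviation "cs \<equiv> coset L N"

lemma coset_sub: assumes "a \<in> C" "b \<in> C" "sb a b \<in> N" shows "cs a \<subseteq> cs b"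
proof
  fix x assume "x \<in> cs a"
  then obtain n where n: "n \<in> N" "x = a \<oplus> n" by (auto simp: coset_def)
  have "a = b \<oplus> sb a b" using assms by (simp add: I5)
  then have "x = b \<oplus> (sb a b \<oplus> n)" using n assms by (metis add_assoc N_c sb_c)
  then show "x \<in> cs b" using N_add[OF assms(3) n(1)] by (auto simp: coset_def)
qed

lemma coset_eq_iff: assumes "a \<in> C" "b \<in> C" shows "cs a = cs b \<longleftrightarrow> sb a b \<in> N"
proof
  assume e: "cs a = cs b"
  have "a \<in> cs a" using assms N_z by (force simp: coset_def)
  then obtain n where n: "n \<in> N" "a = b \<oplus> n" using e by (auto simp: coset_def)
  then show "sb a b \<in> N" using assms by (simp add: I4)
next
  assume h: "sb a b \<in> N"
  then have "sb b a \<in> N" using N_ng[OF h] assms by (simp add: I6)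
  then show "cs a = cs b" using coset_sub h assms by blast
qed

lemma coset_N_iff: "a \<in> C \<Longrightarrow> cs a = cs z \<longleftrightarrow> a \<in> N"
  by (simp add: coset_eq_iff)

abbreviation "Q \<equiv> quot L N"

lemma Q_carr: "lcarr Q = cs ` C" by (simp add: quot_def)
lemma Q_ev: "lev Q = cs ` Ev" by (simp add: quot_def)
lemma Q_od: "lod Q = cs ` Od" by (simp add: quot_def)
lemma Q_hom: "lhom Q = cs ` lhom L" by (auto simp: quot_def lhom_def)

lemma crep_spec: assumes "a \<in> C" shows "crep L N (cs a) \<in> C \<and> cs (crep L N (cs a)) = cs a"
  unfolding crep_def using someI[of "\<lambda>x. x \<in> C \<and> cs a = cs x" a] assms by auto

lemma crep_sb: "a \<in> C \<Longrightarrow> sb (crep L N (cs a)) a \<in> N"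
  using crep_spec coset_eq_iff by blast

lemma Q_add: assumes "a \<in> C" "b \<in> C" shows "ladd Q (cs a) (cs b) = cs (a \<oplus> b)"
proof -
  let ?a = "crep L N (cs a)" and ?b = "crep L N (cs b)"
  have c: "?a \<in> C" "?b \<in> C" using crep_spec assms by auto
  have "sb (?a \<oplus> ?b) (a \<oplus> b) = sb ?a a \<oplus> sb ?b b"
    using c assms by (simp add: sb_def' ng_add add_ac)
  then have "sb (?a \<oplus> ?b) (a \<oplus> b) \<in> N" using crep_sb assms N_add by simp
  then show ?thesis using c assms by (simp add: quot_def coset_eq_iff)
qed

lemma Q_sm: assumes "a \<in> C" shows "lsmul Q c (cs a) = cs (sm c a)"
proof -
  let ?a = "crep L N (cs a)"
  have c: "?a \<in> C" using crep_spec assms by auto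
  have "sb (sm c ?a) (sm c a) = sm c (sb ?a a)"
    using c assms by (simp add: sb_def' sm_add sm_ng)
  then have "sb (sm c ?a) (sm c a) \<in> N" using crep_sb assms N_sm by simp
  then show ?thesis using c assms by (simp add: quot_def coset_eq_iff)
qed

lemma Q_br: assumes "a \<in> C" "b \<in> C" shows "lbr Q (cs a) (cs b) = cs (br a b)"
proof -
  let ?a = "crep L N (cs a)" and ?b = "crep L N (cs b)"
  have c: "?a \<in> C" "?b \<in> C" using crep_spec assms by auto
  define n where "n = sb ?a a"
  define m where "m = sb ?b b"
  have nm: "n \<in> N" "m \<in> N" using crep_sb assms n_def m_def by auto
  have an: "?a = a \<oplus> n" "?b = b \<oplus> m" using c assms by (simp_all add: n_def m_def I5)
  have "br ?a ?b = br a (b \<oplus> m) \<oplus> br n ?b"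
    using an assms nm c by (simp add: br_add_l)
  also have "\<dots> = br a b \<oplus> (br a m \<oplus> br n ?b)"
    using assms nm c by (simp add: br_add_r add_assoc)
  finally have e: "br ?a ?b = br a b \<oplus> (br a m \<oplus> br n ?b)" .
  have "sb (br ?a ?b) (br a b) = br a m \<oplus> br n ?b"
    unfolding e using assms nm c by (simp add: I4)
  then have "sb (br ?a ?b) (br a b) \<in> N" using N_add N_br br_N_l nm assms c by simp
  then show ?thesis using c assms by (simp add: quot_def coset_eq_iff)
qed

lemma Q_zero: "lzero Q = cs z" by (simp add: quot_def)

lemma evod_Q: assumes "X \<in> lev Q" "X \<in> lod Q" shows "X = cs z"
proof -
  obtain a b where ab: "a \<in> Ev" "b \<in> Od" "X = cs a" "X = cs b" using assms by (auto simp: Q_ev Q_od)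
  then have "cs a = cs b" by simp
  then have "sb a b \<in> N" using coset_eq_iff ab(1,2) by simp
  from hom_diff[OF _ _ this] ab have "a \<in> Od \<or> b \<in> Ev \<or> a \<in> N"
    by (auto simp: lhom_iff sp_def)
  then show ?thesis
  proof (elim disjE)
    assume "a \<in> Od" then have "a = z" using ab evod by blast
    then show ?thesis using ab by simp
  next
    assume "b \<in> Ev" then have "b = z" using ab evod by blast
    then show ?thesis using ab by simp
  next
    assume "a \<in> N" then show ?thesis using ab coset_N_iff by simp
  qed
qed

definition rep :: "'a set \<Rightarrow> 'a" where
  "rep X = (if X = cs z then z else if X \<in> cs ` Ev then (SOME a. a \<in> Ev \<and> cs a = X)
     else if X \<in> cs ` Od then (SOME a. a \<in> Od \<and> cs a = X) else crep L N X)"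

lemma rep_ev: assumes "X \<in> lev Q" shows "rep X \<in> Ev \<and> cs (rep X) = X"
proof (cases "X = cs z")
  case True then show ?thesis by (simp add: rep_def sub_z[OF ev_sub])
next
  case False
  have "\<exists>a. a \<in> Ev \<and> cs a = X" using assms by (auto simp: Q_ev)
  then show ?thesis using False assms by (simp add: rep_def Q_ev) (metis (mono_tags, lifting) someI_ex)
qed

lemma rep_od: assumes "X \<in> lod Q" shows "rep X \<in> Od \<and> cs (rep X) = X"
proof (cases "X = cs z")
  case True then show ?thesis by (simp add: rep_def sub_z[OF od_sub])
next
  case False
  then have ne: "X \<notin> cs ` Ev" using evod_Q assms by (auto simp: Q_ev)
  have "\<exists>a. a \<in> Od \<and> cs a = X" using assms by (auto simp: Q_od)
  then show ?thesis using False ne assms by (simp add: rep_def Q_od) (metis (mono_tags, lifting) someI_ex)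
qed

lemma rep_hom: "X \<in> lhom Q \<Longrightarrow> rep X \<in> lhom L \<and> cs (rep X) = X"
  using rep_ev rep_od by (auto simp: lhom_def[of Q] lhom_iff)

lemma ldeg_rep: assumes "X \<in> lhom Q" shows "ldeg L (rep X) = ldeg Q X"
proof (cases "X \<in> lev Q")
  case True then show ?thesis using rep_ev by (simp add: ldeg_def)
next
  case False
  then have "X \<in> lod Q" using assms by (simp add: lhom_def)
  then have r: "rep X \<in> Od" "cs (rep X) = X" using rep_od by auto
  have "rep X \<notin> Ev" using False r by (auto simp: Q_ev)
  then show ?thesis using False by (simp add: ldeg_def)
qed

lemma lsign_rep: "X \<in> lhom Q \<Longrightarrow> Y \<in> lhom Q \<Longrightarrow> lsign L (rep X) (rep Y) = lsign Q X Y"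
  by (simp add: lsign_def ldeg_rep)

lemma rep_cs: "a \<in> lhom L \<Longrightarrow> sb (rep (cs a)) a \<in> N"
  using rep_hom[of "cs a"] coset_eq_iff by (auto simp: Q_hom)

end

lemma wi_gen: "g \<in> tens_rels L \<or> g \<in> lsa_rels L \<or> g \<in> box_rels L \<Longrightarrow> g \<in> wedge_ideal L"
  unfolding wedge_ideal_def by (rule gen_ideal.gen) blast

lemma rel_T1: "(x \<in> lev L \<and> x' \<in> lev L) \<or> (x \<in> lod L \<and> x' \<in> lod L) \<Longrightarrow> y \<in> lhom L \<Longrightarrow>
  vadd (vsym (ladd L x x') y) (vsmul (-1) (vadd (vsym x y) (vsym x' y))) \<in> wedge_ideal L"
  by (rule wi_gen) (unfold tens_rels_def, blast)
lemma rel_T2: "(x \<in> lev L \<and> x' \<in> lev L) \<or> (x \<in> lod L \<and> x' \<in> lod L) \<Longrightarrow> y \<in> lhom L \<Longrightarrow>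
  vadd (vsym y (ladd L x x')) (vsmul (-1) (vadd (vsym y x) (vsym y x'))) \<in> wedge_ideal L"
  by (rule wi_gen) (unfold tens_rels_def, blast)
lemma rel_T3: "x \<in> lhom L \<Longrightarrow> y \<in> lhom L \<Longrightarrow>
  vadd (vsym (lsmul L c x) y) (vsmul (- c) (vsym x y)) \<in> wedge_ideal L"
  by (rule wi_gen) (unfold tens_rels_def, blast)
lemma rel_T4: "x \<in> lhom L \<Longrightarrow> y \<in> lhom L \<Longrightarrow>
  vadd (vsym x (lsmul L c y)) (vsmul (- c) (vsym x y)) \<in> wedge_ideal L"
  by (rule wi_gen) (unfold tens_rels_def, blast)
lemma rel_T5: "x \<in> lhom L \<Longrightarrow> x' \<in> lhom L \<Longrightarrow> y \<in> lhom L \<Longrightarrow>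
  vadd (vsym (lbr L x x') y)
        (vadd (vsmul (-1) (vsym x (lbr L x' y))) (vsmul (lsign L x x') (vsym x' (lbr L x y)))) \<in> wedge_ideal L"
  by (rule wi_gen) (unfold tens_rels_def, blast)
lemma rel_T6: "x \<in> lhom L \<Longrightarrow> y \<in> lhom L \<Longrightarrow> y' \<in> lhom L \<Longrightarrow>
  vadd (vsym x (lbr L y y'))
        (vadd (vsmul (- ((-1) ^ (ldeg L y' * (ldeg L x + ldeg L y)))) (vsym (lbr L y' x) y))
              (vsmul (lsign L x y) (vsym (lbr L y x) y'))) \<in> wedge_ideal L"
  by (rule wi_gen) (unfold tens_rels_def, blast)
lemma rel_B1: "x \<in> lhom L \<Longrightarrow> y \<in> lhom L \<Longrightarrow> vadd (vsym x y) (vsmul (lsign L x y) (vsym y x)) \<in> wedge_ideal L"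
  by (rule wi_gen) (unfold box_rels_def, blast)
lemma rel_B2: "x \<in> lev L \<Longrightarrow> vsym x x \<in> wedge_ideal L"
  by (rule wi_gen) (unfold box_rels_def, blast)
lemma rel_S: "p \<in> lhom L \<times> lhom L \<Longrightarrow> q \<in> lhom L \<times> lhom L \<Longrightarrow>
  vadd (vbr L (vsym (fst p) (snd p)) (vsym (fst q) (snd q)))
           (vsmul ((-1) ^ (pdeg L p * pdeg L q)) (vbr L (vsym (fst q) (snd q)) (vsym (fst p) (snd p)))) \<in> wedge_ideal L"
  by (rule wi_gen) (unfold lsa_rels_def, blast)
lemma rel_J: "p \<in> lhom L \<times> lhom L \<Longrightarrow> q \<in> lhom L \<times> lhom L \<Longrightarrow> r \<in> lhom L \<times> lhom L \<Longrightarrow>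
  (let a = vsym (fst p) (snd p); b = vsym (fst q) (snd q); c = vsym (fst r) (snd r) in
        vadd (vadd (vsmul ((-1) ^ (pdeg L p * pdeg L r)) (vbr L a (vbr L b c)))
                   (vsmul ((-1) ^ (pdeg L q * pdeg L p)) (vbr L b (vbr L c a))))
             (vsmul ((-1) ^ (pdeg L r * pdeg L q)) (vbr L c (vbr L a b)))) \<in> wedge_ideal L"
  by (rule wi_gen) (unfold lsa_rels_def, blast)

lemma gi4: "W \<in> gen_ideal L R \<Longrightarrow> B \<in> gen_ideal L R \<Longrightarrow> C \<in> gen_ideal L R \<Longrightarrow> D \<in> gen_ideal L R \<Longrightarrow>
  (\<And>p. A p = W p - B p - C p - D p) \<Longrightarrow> A \<in> gen_ideal L R"
proof -
  assume a: "W \<in> gen_ideal L R" "B \<in> gen_ideal L R" "C \<in> gen_ideal L R" "D \<in> gen_ideal L R"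
    "\<And>p. A p = W p - B p - C p - D p"
  have "fsub (fsub (fsub W B) C) D \<in> gen_ideal L R" using a by (simp add: gi_sub)
  moreover have "fsub (fsub (fsub W B) C) D = A" using a(5) by (auto simp: fsub_def)
  ultimately show ?thesis by simp
qed

lemma wi_lin: "F \<in> wedge_ideal L \<Longrightarrow> G \<in> wedge_ideal L \<Longrightarrow> (\<lambda>p. a * F p + b * G p) \<in> wedge_ideal L"
  unfolding wedge_ideal_def by (rule gi_lin)
lemma wi_add': "F \<in> wedge_ideal L \<Longrightarrow> G \<in> wedge_ideal L \<Longrightarrow> (\<lambda>p. F p + G p) \<in> wedge_ideal L"
  using wi_lin[of F L G 1 1] by simp
lemma wi_sub: "F \<in> wedge_ideal L \<Longrightarrow> G \<in> wedge_ideal L \<Longrightarrow> fsub F G \<in> wedge_ideal L"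
  unfolding wedge_ideal_def by (rule gi_sub)
lemma wi_from_sub: "fsub F G \<in> wedge_ideal L \<Longrightarrow> G \<in> wedge_ideal L \<Longrightarrow> F \<in> wedge_ideal L"
  unfolding wedge_ideal_def by (rule gi_from_sub)
lemma wi_smul': "F \<in> wedge_ideal L \<Longrightarrow> (\<lambda>p. a * F p) \<in> wedge_ideal L"
  unfolding wedge_ideal_def by (rule gi_smul')
lemma wi4: "W \<in> wedge_ideal L \<Longrightarrow> B \<in> wedge_ideal L \<Longrightarrow> C \<in> wedge_ideal L \<Longrightarrow> D \<in> wedge_ideal L \<Longrightarrow>
  (\<And>p. A p = W p - B p - C p - D p) \<Longrightarrow> A \<in> wedge_ideal L"
  unfolding wedge_ideal_def by (rule gi4)
lemma wi_zero: "g \<in> wedge_ideal L \<Longrightarrow> (\<lambda>p. 0) \<in> wedge_ideal L"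
  unfolding wedge_ideal_def by (rule gi_zero)
lemma wi_fs: "(\<lambda>p. 0) \<in> wedge_ideal L \<Longrightarrow> finite A \<Longrightarrow> (\<And>i. i \<in> A \<Longrightarrow> g i \<in> wedge_ideal L) \<Longrightarrow> fs A g \<in> wedge_ideal L"
  unfolding wedge_ideal_def by (rule gi_fs)
lemma wi_brl: "f \<in> wedge_ideal L \<Longrightarrow> w \<in> VL L \<Longrightarrow> vbr L w f \<in> wedge_ideal L"
  unfolding wedge_ideal_def by (rule gen_ideal.brl)
lemma wi_brr: "f \<in> wedge_ideal L \<Longrightarrow> w \<in> VL L \<Longrightarrow> vbr L f w \<in> wedge_ideal L"
  unfolding wedge_ideal_def by (rule gen_ideal.brr)

context LS begin

abbreviation "I \<equiv> wedge_ideal L"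

lemma z_ev: "z \<in> Ev" using sub_z[OF ev_sub] .
lemma z_od: "z \<in> Od" using sub_z[OF od_sub] .
lemma z_hom: "z \<in> lhom L" using z_ev by (simp add: lhom_iff)

lemma I_zero: "(\<lambda>p. 0) \<in> I" using wi_zero[OF rel_B2[OF z_ev]] .

lemma vsym_z_l: "y \<in> lhom L \<Longrightarrow> vsym z y \<in> I"
  using rel_T3[OF z_hom, of y 0] by (simp add: vadd_def vsmul_def)
lemma vsym_z_r: "y \<in> lhom L \<Longrightarrow> vsym y z \<in> I"
  using rel_T4[OF _ z_hom, of y 0] by (simp add: vadd_def vsmul_def)

end

locale LSZ = LS + assumes NZ: "N \<subseteq> ext_center L"
begin

lemma zsym: assumes n: "n \<in> N" "n \<in> lhom L" and y: "y \<in> lhom L" shows "vsym n y \<in> I"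
proof -
  have W: "wedge_elt L n y \<in> I" using NZ n y by (auto simp: ext_center_def)
  have zz: "vsym z z \<in> I" using vsym_z_l[OF z_hom] .
  have zn: "vsym n z \<in> I" "vsym z y \<in> I" "vsym z n \<in> I" "vsym y z \<in> I"
    using vsym_z_l vsym_z_r n y by auto
  consider "n \<in> Ev" "y \<in> Ev" | "n \<in> Ev" "y \<in> Od" | "n \<in> Od" "y \<in> Ev" | "n \<in> Od" "y \<in> Od"
    using n y by (auto simp: lhom_iff)
  then show ?thesis
  proof cases
    case 1
    then show ?thesis using wi4[OF W zn(1) zn(2) zz]
      by (simp add: wedge_elt_def comp0_ev comp1_ev vadd_def)
  next
    case 2
    then show ?thesis using wi4[OF W zn(1) zz zn(2)]
      by (simp add: wedge_elt_def comp0_ev comp1_ev comp0_od comp1_od vadd_def)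
  next
    case 3
    then show ?thesis using wi4[OF W zn(2) zz zn(1)]
      by (simp add: wedge_elt_def comp0_ev comp1_ev comp0_od comp1_od vadd_def)
  next
    case 4
    then show ?thesis using wi4[OF W zz zn(2) zn(1)]
      by (simp add: wedge_elt_def comp0_ev comp1_ev comp0_od comp1_od vadd_def)
  qed
qed

lemma zsym_r: assumes n: "n \<in> N" "n \<in> lhom L" and y: "y \<in> lhom L" shows "vsym y n \<in> I"
proof -
  have "fsub (vadd (vsym y n) (vsmul (lsign L y n) (vsym n y))) (vsmul (lsign L y n) (vsym n y)) \<in> I"
    using rel_B1[OF y n(2)] zsym[OF n y] wi_smul' wi_sub unfolding vsmul_def by blast
  moreover have "fsub (vadd (vsym y n) (vsmul (lsign L y n) (vsym n y))) (vsmul (lsign L y n) (vsym n y)) = vsym y n"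
    by (auto simp: fsub_def vadd_def vsmul_def)
  ultimately show ?thesis by simp
qed

lemma cong_l: assumes a: "a \<in> lhom L" "a' \<in> lhom L" "sb a a' \<in> N" and b: "b \<in> lhom L"
  shows "fsub (vsym a b) (vsym a' b) \<in> I"
  using hom_diff[OF a]
proof
  assume h: "sp a a' \<and> sp a' (sb a a')"
  let ?n = "sb a a'"
  have nh: "?n \<in> lhom L" using h by (auto simp: sp_def lhom_iff)
  have e: "ladd L a' ?n = a" using a by (simp add: I5)
  have r: "vadd (vsym (ladd L a' ?n) b) (vsmul (-1) (vadd (vsym a' b) (vsym ?n b))) \<in> I"
    using rel_T1[OF _ b] h by (auto simp: sp_def)
  have "(\<lambda>p. 1 * vadd (vsym (ladd L a' ?n) b) (vsmul (-1) (vadd (vsym a' b) (vsym ?n b))) p + 1 * vsym ?n b p) \<in> I"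
    using wi_lin[OF r zsym[OF a(3) nh b], of 1 1] .
  moreover have "(\<lambda>p. 1 * vadd (vsym (ladd L a' ?n) b) (vsmul (-1) (vadd (vsym a' b) (vsym ?n b))) p + 1 * vsym ?n b p)
     = fsub (vsym a b) (vsym a' b)"
    unfolding e by (auto simp: fsub_def vadd_def vsmul_def)
  ultimately show ?thesis by metis
next
  assume h: "a \<in> N \<and> a' \<in> N"
  then show ?thesis using zsym a b wi_sub by blast
qed

lemma cong_r: assumes a: "a \<in> lhom L" "a' \<in> lhom L" "sb a a' \<in> N" and b: "b \<in> lhom L"
  shows "fsub (vsym b a) (vsym b a') \<in> I"
  using hom_diff[OF a]
proof
  assume h: "sp a a' \<and> sp a' (sb a a')"
  let ?n = "sb a a'"
  have nh: "?n \<in> lhom L" using h by (auto simp: sp_def lhom_iff)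
  have e: "ladd L a' ?n = a" using a by (simp add: I5)
  have r: "vadd (vsym b (ladd L a' ?n)) (vsmul (-1) (vadd (vsym b a') (vsym b ?n))) \<in> I"
    using rel_T2[OF _ b] h by (auto simp: sp_def)
  have "(\<lambda>p. 1 * vadd (vsym b (ladd L a' ?n)) (vsmul (-1) (vadd (vsym b a') (vsym b ?n))) p + 1 * vsym b ?n p) \<in> I"
    using wi_lin[OF r zsym_r[OF a(3) nh b], of 1 1] .
  moreover have "(\<lambda>p. 1 * vadd (vsym b (ladd L a' ?n)) (vsmul (-1) (vadd (vsym b a') (vsym b ?n))) p + 1 * vsym b ?n p)
     = fsub (vsym b a) (vsym b a')"
    unfolding e by (auto simp: fsub_def vadd_def vsmul_def)
  ultimately show ?thesis by metis
next
  assume h: "a \<in> N \<and> a' \<in> N"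
  then show ?thesis using zsym_r a b wi_sub by blast
qed

lemma cong: assumes "a \<in> lhom L" "a' \<in> lhom L" "sb a a' \<in> N" "b \<in> lhom L" "b' \<in> lhom L" "sb b b' \<in> N"
  shows "fsub (vsym a b) (vsym a' b') \<in> I"
proof -
  have "fsub (vsym a b) (vsym a' b) \<in> I" "fsub (vsym a' b) (vsym a' b') \<in> I"
    using cong_l cong_r assms by auto
  then have "(\<lambda>p. 1 * fsub (vsym a b) (vsym a' b) p + 1 * fsub (vsym a' b) (vsym a' b') p) \<in> I"
    by (rule wi_lin)
  then show ?thesis by (simp add: fsub_def)
qed

end

declare finite_supp_vsmul[simp] finite_supp_vadd[simp] finite_supp_vbr[simp] finite_supp_push[simp]

lemma vbr_symp: "vbr L (vsymp P) (vsymp T) = vsmul (- lsign L (fst P) (snd P)) (vsymp (brimg L (P, T)))"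
  by (simp add: vsymp_def vbr_sym brimg_def)

lemma vbr_symp_apply: "vbr L (vsymp P) (vsymp T) q = vbk L P T q"
  by (simp add: vbr_symp vbk_def vsmul_def vsymp_apply brimg_def)

lemma push_vsymp: "push h (vsymp P :: _ \<Rightarrow> 'k::field) = vsymp (h P)"
  using push_vsym[of h "fst P" "snd P"] by (simp add: vsymp_def)

lemma vbr_fs2:
  assumes "finite A" "finite B"
  shows "vbr L (fs A (\<lambda>i. vsmul (c i) (vsymp (h i)))) (fs B (\<lambda>j. vsmul (d j) (vsymp (k j))))
       = fs A (\<lambda>i. fs B (\<lambda>j. vsmul (c i * d j) (vbr L (vsymp (h i)) (vsymp (k j)))))"
proof -
  have f1: "finite (supp (fs B (\<lambda>j. vsmul (d j) (vsymp (k j)))))"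
    using assms by (intro finite_supp_fs finite_supp_vsmul) auto
  have "vbr L (fs A (\<lambda>i. vsmul (c i) (vsymp (h i)))) (fs B (\<lambda>j. vsmul (d j) (vsymp (k j))))
     = fs A (\<lambda>i. vbr L (vsmul (c i) (vsymp (h i))) (fs B (\<lambda>j. vsmul (d j) (vsymp (k j)))))"
    using assms f1 by (intro vbr_fs_left) auto
  also have "\<dots> = fs A (\<lambda>i. fs B (\<lambda>j. vsmul (c i * d j) (vbr L (vsymp (h i)) (vsymp (k j)))))"
    using assms f1 by (simp add: vbr_smul_left vbr_fs_right vbr_smul_right)
       (auto simp: fs_def vsmul_def sum_distrib_left mult.assoc mult.left_commute)
  finally show ?thesis .
qed

lemma push_fs2:
  assumes "finite A" "finite B" "\<And>i j. finite (supp (G i j))"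
  shows "push h (fs A (\<lambda>i. fs B (\<lambda>j. vsmul (e i j) (G i j)))) = fs A (\<lambda>i. fs B (\<lambda>j. vsmul (e i j) (push h (G i j))))"
proof -
  have "push h (fs A (\<lambda>i. fs B (\<lambda>j. vsmul (e i j) (G i j)))) = fs A (\<lambda>i. push h (fs B (\<lambda>j. vsmul (e i j) (G i j))))"
    using assms by (intro push_fs) (auto intro!: finite_supp_fs finite_supp_vsmul)
  also have "\<dots> = fs A (\<lambda>i. fs B (\<lambda>j. push h (vsmul (e i j) (G i j))))"
    using assms by (subst push_fs) (auto intro!: finite_supp_vsmul)
  also have "\<dots> = fs A (\<lambda>i. fs B (\<lambda>j. vsmul (e i j) (push h (G i j))))"
    using assms by (simp add: push_smul)
  finally show ?thesis .
qed

context LS begin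

definition rr :: "'a set \<times> 'a set \<Rightarrow> 'a \<times> 'a" where
  "rr P = (rep (fst P), rep (snd P))"

definition csp :: "'a \<times> 'a \<Rightarrow> 'a set \<times> 'a set" where
  "csp p = (cs (fst p), cs (snd p))"

lemma cs_hom: "a \<in> lhom L \<Longrightarrow> cs a \<in> lhom Q" by (simp add: Q_hom)
lemma repH: "X \<in> lhom Q \<Longrightarrow> rep X \<in> lhom L" using rep_hom by blast
lemma cs_rep[simp]: "X \<in> lhom Q \<Longrightarrow> cs (rep X) = X" using rep_hom by blast

lemma QX_add: "X \<in> lhom Q \<Longrightarrow> X' \<in> lhom Q \<Longrightarrow> ladd Q X X' = cs (rep X \<oplus> rep X')"
  using Q_add[of "rep X" "rep X'"] repH by simp
lemma QX_sm: "X \<in> lhom Q \<Longrightarrow> lsmul Q c X = cs (sm c (rep X))"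
  using Q_sm[of "rep X" c] repH by simp
lemma QX_br: "X \<in> lhom Q \<Longrightarrow> Y \<in> lhom Q \<Longrightarrow> lbr Q X Y = cs (br (rep X) (rep Y))"
  using Q_br[of "rep X" "rep Y"] repH by simp

lemma Q_br_hom: "X \<in> lhom Q \<Longrightarrow> Y \<in> lhom Q \<Longrightarrow> lbr Q X Y \<in> lhom Q"
  by (simp add: QX_br cs_hom br_hom repH)
lemma Q_sm_hom: "X \<in> lhom Q \<Longrightarrow> lsmul Q c X \<in> lhom Q"
  using repH[of X] sub_sm[OF ev_sub] sub_sm[OF od_sub]
  by (auto simp: QX_sm lhom_iff intro!: cs_hom)

lemma rep_par: "(X \<in> lev Q \<and> X' \<in> lev Q) \<or> (X \<in> lod Q \<and> X' \<in> lod Q) \<Longrightarrow>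
   (rep X \<in> Ev \<and> rep X' \<in> Ev) \<or> (rep X \<in> Od \<and> rep X' \<in> Od)"
  using rep_ev rep_od by blast

lemma Q_add_hom: "(X \<in> lev Q \<and> X' \<in> lev Q) \<or> (X \<in> lod Q \<and> X' \<in> lod Q) \<Longrightarrow> ladd Q X X' \<in> lhom Q"
proof -
  assume h: "(X \<in> lev Q \<and> X' \<in> lev Q) \<or> (X \<in> lod Q \<and> X' \<in> lod Q)"
  then have "X \<in> lhom Q" "X' \<in> lhom Q" by (auto simp: lhom_def)
  moreover have "rep X \<oplus> rep X' \<in> lhom L" using rep_par[OF h] sub_add[OF ev_sub] sub_add[OF od_sub]
    by (auto simp: lhom_iff)
  ultimately show ?thesis by (simp add: QX_add cs_hom)
qed

definition HQ :: "('a set \<times> 'a set \<Rightarrow> 'k) \<Rightarrow> bool" where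
  "HQ f \<longleftrightarrow> finite (supp f) \<and> supp f \<subseteq> lhom Q \<times> lhom Q"

lemma HQ_vsym: "X \<in> lhom Q \<Longrightarrow> Y \<in> lhom Q \<Longrightarrow> HQ (vsym X Y)" by (simp add: HQ_def)
lemma HQ_vadd: "HQ f \<Longrightarrow> HQ g \<Longrightarrow> HQ (vadd f g)"
  using supp_vadd[of f g] by (auto simp: HQ_def)
lemma HQ_vsmul: "HQ f \<Longrightarrow> HQ (vsmul c f)"
  using supp_vsmul[of c f] by (auto simp: HQ_def)
lemma HQ_vbr: "HQ f \<Longrightarrow> HQ g \<Longrightarrow> HQ (vbr Q f g)"
proof -
  assume a: "HQ f" "HQ g"
  have "supp (vbr Q f g) \<subseteq> brimg Q ` (supp f \<times> supp g)" using a supp_vbr[of f g Q] by (auto simp: HQ_def)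
  moreover have "brimg Q ` (supp f \<times> supp g) \<subseteq> lhom Q \<times> lhom Q"
    using a by (auto simp: HQ_def brimg_def intro!: Q_br_hom)
  ultimately show ?thesis using a by (auto simp: HQ_def)
qed

end

context LSZ begin

lemma rcong: assumes "A \<in> lhom Q" "B \<in> lhom Q" "a \<in> lhom L" "b \<in> lhom L" "cs a = A" "cs b = B"
  shows "fsub (vsym (rep A) (rep B)) (vsym a b) \<in> I"
proof (rule cong)
  show "rep A \<in> lhom L" "rep B \<in> lhom L" "a \<in> lhom L" "b \<in> lhom L" using assms repH by auto
  show "sb (rep A) a \<in> N" using assms repH coset_eq_iff[of "rep A" a] by simp
  show "sb (rep B) b \<in> N" using assms repH coset_eq_iff[of "rep B" b] by simp
qed

lemma pcong: assumes "A \<in> lhom Q \<times> lhom Q" "p \<in> lhom L \<times> lhom L" "csp p = A"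
  shows "fsub (vsymp (rr A)) (vsymp p) \<in> I"
  using rcong[of "fst A" "snd A" "fst p" "snd p"] assms by (auto simp: vsymp_def rr_def csp_def)

lemma rr_hom: "P \<in> lhom Q \<times> lhom Q \<Longrightarrow> rr P \<in> lhom L \<times> lhom L"
  by (auto simp: rr_def repH)

lemma lsign_rr: "P \<in> lhom Q \<times> lhom Q \<Longrightarrow> lsign L (fst (rr P)) (snd (rr P)) = lsign Q (fst P) (snd P)"
  by (auto simp: rr_def lsign_rep)

lemma pdeg_rr: "P \<in> lhom Q \<times> lhom Q \<Longrightarrow> pdeg L (rr P) = pdeg Q P"
  by (auto simp: rr_def pdeg_def ldeg_rep)

lemma brimg_hom: "P \<in> lhom Q \<times> lhom Q \<Longrightarrow> T \<in> lhom Q \<times> lhom Q \<Longrightarrow> brimg Q (P, T) \<in> lhom Q \<times> lhom Q"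
  by (auto simp: brimg_def Q_br_hom)

lemma brimgL_hom: "p \<in> lhom L \<times> lhom L \<Longrightarrow> t \<in> lhom L \<times> lhom L \<Longrightarrow> brimg L (p, t) \<in> lhom L \<times> lhom L"
  by (auto simp: brimg_def br_hom)

lemma csp_brimg: "P \<in> lhom Q \<times> lhom Q \<Longrightarrow> T \<in> lhom Q \<times> lhom Q \<Longrightarrow> csp (brimg L (rr P, rr T)) = brimg Q (P, T)"
  by (auto simp: csp_def brimg_def rr_def QX_br)

lemma csp_brimg2: "p \<in> lhom L \<times> lhom L \<Longrightarrow> t \<in> lhom L \<times> lhom L \<Longrightarrow> csp (brimg L (p, t)) = brimg Q (csp p, csp t)"
  by (auto simp: csp_def brimg_def Q_br)

lemma csp_rr: "P \<in> lhom Q \<times> lhom Q \<Longrightarrow> csp (rr P) = P"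
  by (auto simp: csp_def rr_def)

lemma sym2: assumes P: "P \<in> lhom Q \<times> lhom Q" and T: "T \<in> lhom Q \<times> lhom Q"
  shows "fsub (push rr (vbr Q (vsymp P) (vsymp T))) (vbr L (vsymp (rr P)) (vsymp (rr T))) \<in> I"
proof -
  let ?s = "lsign Q (fst P) (snd P)"
  have e1: "push rr (vbr Q (vsymp P) (vsymp T)) = vsmul (- ?s) (vsymp (rr (brimg Q (P, T))))"
    by (simp add: vbr_symp push_smul push_vsymp)
  have e: "fsub (push rr (vbr Q (vsymp P) (vsymp T))) (vbr L (vsymp (rr P)) (vsymp (rr T)))
    = (\<lambda>p. (- ?s) * fsub (vsymp (rr (brimg Q (P, T)))) (vsymp (brimg L (rr P, rr T))) p)"
    using P unfolding e1 by (simp add: vbr_symp lsign_rr fsub_def vsmul_def algebra_simps)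
  have "fsub (vsymp (rr (brimg Q (P, T)))) (vsymp (brimg L (rr P, rr T))) \<in> I"
    using pcong brimg_hom brimgL_hom rr_hom csp_brimg P T by simp
  then show ?thesis unfolding e by (rule wi_smul')
qed

lemma sym3: assumes P: "P \<in> lhom Q \<times> lhom Q" and T: "T \<in> lhom Q \<times> lhom Q" and U: "U \<in> lhom Q \<times> lhom Q"
  shows "fsub (push rr (vbr Q (vsymp P) (vbr Q (vsymp T) (vsymp U))))
              (vbr L (vsymp (rr P)) (vbr L (vsymp (rr T)) (vsymp (rr U)))) \<in> I"
proof -
  let ?sP = "lsign Q (fst P) (snd P)" and ?sT = "lsign Q (fst T) (snd T)"
  let ?V = "brimg Q (T, U)" and ?v = "brimg L (rr T, rr U)"
  have e1: "push rr (vbr Q (vsymp P) (vbr Q (vsymp T) (vsymp U))) = vsmul (- ?sT) (vsmul (- ?sP) (vsymp (rr (brimg Q (P, ?V)))))"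
    by (simp add: vbr_symp vbr_smul_right push_smul push_vsymp finite_supp_vsmul)
  have e2: "vbr L (vsymp (rr P)) (vbr L (vsymp (rr T)) (vsymp (rr U))) = vsmul (- ?sT) (vsmul (- ?sP) (vsymp (brimg L (rr P, ?v))))"
    using P T by (simp add: vbr_symp vbr_smul_right lsign_rr)
  have e: "fsub (push rr (vbr Q (vsymp P) (vbr Q (vsymp T) (vsymp U))))
              (vbr L (vsymp (rr P)) (vbr L (vsymp (rr T)) (vsymp (rr U))))
    = (\<lambda>p. (?sT * ?sP) * fsub (vsymp (rr (brimg Q (P, ?V)))) (vsymp (brimg L (rr P, ?v))) p)"
    unfolding e1 e2 by (simp add: fsub_def vsmul_def algebra_simps)
  have vh: "?v \<in> lhom L \<times> lhom L" using brimgL_hom rr_hom T U by simp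
  have "csp (brimg L (rr P, ?v)) = brimg Q (P, ?V)"
    using csp_brimg2 rr_hom P T U vh csp_rr by simp
  then have "fsub (vsymp (rr (brimg Q (P, ?V)))) (vsymp (brimg L (rr P, ?v))) \<in> I"
    using pcong brimg_hom brimgL_hom rr_hom P T U vh by simp
  then show ?thesis unfolding e by (rule wi_smul')
qed

lemma psi_br: assumes W: "HQ W" and F: "HQ F"
  shows "fsub (push rr (vbr Q W F)) (vbr L (push rr W) (push rr F)) \<in> I"
proof -
  let ?SW = "supp W" and ?SF = "supp F"
  have fin: "finite ?SW" "finite ?SF" using W F by (auto simp: HQ_def)
  have eW: "fs ?SW (\<lambda>P. vsmul (W P) (vsymp P)) = W" using expand[OF fin(1) subset_refl] by simp
  have eF: "fs ?SF (\<lambda>P. vsmul (F P) (vsymp P)) = F" using expand[OF fin(2) subset_refl] by simp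
  have "vbr Q (fs ?SW (\<lambda>P. vsmul (W P) (vsymp P))) (fs ?SF (\<lambda>P. vsmul (F P) (vsymp P)))
       = fs ?SW (\<lambda>P. fs ?SF (\<lambda>T. vsmul (W P * F T) (vbr Q (vsymp P) (vsymp T))))"
    using vbr_fs2[OF fin, of Q W "\<lambda>P. P" F "\<lambda>P. P"] by simp
  then have b1: "vbr Q W F = fs ?SW (\<lambda>P. fs ?SF (\<lambda>T. vsmul (W P * F T) (vbr Q (vsymp P) (vsymp T))))"
    unfolding eW eF .
  have b2: "vbr L (push rr W) (push rr F) = fs ?SW (\<lambda>P. fs ?SF (\<lambda>T. vsmul (W P * F T) (vbr L (vsymp (rr P)) (vsymp (rr T)))))"
    unfolding push_def using vbr_fs2[OF fin, of L W rr F rr] by simp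
  have b3: "push rr (vbr Q W F) = fs ?SW (\<lambda>P. fs ?SF (\<lambda>T. vsmul (W P * F T) (push rr (vbr Q (vsymp P) (vsymp T)))))"
    unfolding b1 using fin by (intro push_fs2) auto
  have e: "fsub (push rr (vbr Q W F)) (vbr L (push rr W) (push rr F))
     = fs ?SW (\<lambda>P. fs ?SF (\<lambda>T. (\<lambda>p. (W P * F T) * fsub (push rr (vbr Q (vsymp P) (vsymp T))) (vbr L (vsymp (rr P)) (vsymp (rr T))) p)))"
    unfolding b2 b3 by (auto simp: fs_def fsub_def vsmul_def sum_subtractf right_diff_distrib)
  have h: "fsub (push rr (vbr Q (vsymp P) (vsymp T))) (vbr L (vsymp (rr P)) (vsymp (rr T))) \<in> I"
    if "P \<in> ?SW" "T \<in> ?SF" for P T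
    using sym2[of P T] that W F unfolding HQ_def by blast
  show ?thesis unfolding e
    using h fin by (auto intro!: wi_fs I_zero wi_smul')
qed

end

lemma wi_comb:
  assumes "R \<in> wedge_ideal L" "D1 \<in> wedge_ideal L" "D2 \<in> wedge_ideal L" "D3 \<in> wedge_ideal L"
    "\<And>p. G p = R p + ca * D1 p + cb * D2 p + cc * D3 p"
  shows "G \<in> wedge_ideal L"
proof -
  have "(\<lambda>p. 1 * R p + 1 * (\<lambda>p. 1 * (\<lambda>p. ca * D1 p + cb * D2 p) p + cc * D3 p) p) \<in> wedge_ideal L"
    using assms by (intro wi_lin) auto
  moreover have "G = (\<lambda>p. 1 * R p + 1 * (\<lambda>p. 1 * (\<lambda>p. ca * D1 p + cb * D2 p) p + cc * D3 p) p)"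
    using assms(5) by (auto simp: algebra_simps)
  ultimately show ?thesis by simp
qed

context LS begin
lemma sm_hom: "a \<in> lhom L \<Longrightarrow> sm c a \<in> lhom L"
  using sub_sm[OF ev_sub] sub_sm[OF od_sub] by (auto simp: lhom_iff)
lemma add_hom: "(a \<in> Ev \<and> a' \<in> Ev) \<or> (a \<in> Od \<and> a' \<in> Od) \<Longrightarrow> a \<oplus> a' \<in> lhom L"
  using sub_add[OF ev_sub] sub_add[OF od_sub] by (auto simp: lhom_iff)
lemma levQ_hom: "X \<in> lev Q \<Longrightarrow> X \<in> lhom Q" by (simp add: lhom_def)
lemma lodQ_hom: "X \<in> lod Q \<Longrightarrow> X \<in> lhom Q" by (simp add: lhom_def)
end

context LSZ begin

definition psiok where
  "psiok G \<longleftrightarrow> HQ G \<and> push rr G \<in> I"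

lemma push_vsym_rr: "push rr (vsym X Y) = vsym (rep X) (rep Y)"
  by (simp add: push_vsym rr_def vsymp_def)

lemma psi_T1:
  assumes h: "(X \<in> lev Q \<and> X' \<in> lev Q) \<or> (X \<in> lod Q \<and> X' \<in> lod Q)" and Y: "Y \<in> lhom Q"
  shows "psiok (vadd (vsym (ladd Q X X') Y) (vsmul (-1) (vadd (vsym X Y) (vsym X' Y))))"
proof -
  have XX: "X \<in> lhom Q" "X' \<in> lhom Q" using h by (auto simp: lhom_def)
  let ?a = "rep X" and ?a' = "rep X'" and ?b = "rep Y"
  have par: "(?a \<in> Ev \<and> ?a' \<in> Ev) \<or> (?a \<in> Od \<and> ?a' \<in> Od)" using rep_par[OF h] .
  have hq: "HQ (vadd (vsym (ladd Q X X') Y) (vsmul (-1) (vadd (vsym X Y) (vsym X' Y))))"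
    using XX Y Q_add_hom[OF h] by (intro HQ_vadd HQ_vsmul HQ_vsym) auto
  have R: "vadd (vsym (?a \<oplus> ?a') ?b) (vsmul (-1) (vadd (vsym ?a ?b) (vsym ?a' ?b))) \<in> I"
    using rel_T1[OF par repH[OF Y]] .
  have D: "fsub (vsym (rep (ladd Q X X')) (rep Y)) (vsym (?a \<oplus> ?a') ?b) \<in> I"
    using XX Y Q_add_hom[OF h] add_hom[OF par] repH by (intro rcong) (auto simp: QX_add)
  have e: "push rr (vadd (vsym (ladd Q X X') Y) (vsmul (-1) (vadd (vsym X Y) (vsym X' Y)))) = vadd (vsym (rep (ladd Q X X')) ?b) (vsmul (-1) (vadd (vsym ?a ?b) (vsym ?a' ?b)))"
    by (simp add: push_add push_smul push_vsym_rr)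
  have "push rr (vadd (vsym (ladd Q X X') Y) (vsmul (-1) (vadd (vsym X Y) (vsym X' Y)))) \<in> I" unfolding e
    by (rule wi_comb[OF R D I_zero I_zero, where ca=1 and cb=0 and cc=0])
      (simp add: vadd_def vsmul_def fsub_def)
  then show ?thesis using hq by (simp add: psiok_def)
qed

lemma psi_T2:
  assumes h: "(X \<in> lev Q \<and> X' \<in> lev Q) \<or> (X \<in> lod Q \<and> X' \<in> lod Q)" and Y: "Y \<in> lhom Q"
  shows "psiok (vadd (vsym Y (ladd Q X X')) (vsmul (-1) (vadd (vsym Y X) (vsym Y X'))))"
proof -
  have XX: "X \<in> lhom Q" "X' \<in> lhom Q" using h by (auto simp: lhom_def)
  let ?a = "rep X" and ?a' = "rep X'" and ?b = "rep Y"
  have par: "(?a \<in> Ev \<and> ?a' \<in> Ev) \<or> (?a \<in> Od \<and> ?a' \<in> Od)" using rep_par[OF h] .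
  have hq: "HQ (vadd (vsym Y (ladd Q X X')) (vsmul (-1) (vadd (vsym Y X) (vsym Y X'))))"
    using XX Y Q_add_hom[OF h] by (intro HQ_vadd HQ_vsmul HQ_vsym) auto
  have R: "vadd (vsym ?b (?a \<oplus> ?a')) (vsmul (-1) (vadd (vsym ?b ?a) (vsym ?b ?a'))) \<in> I"
    using rel_T2[OF par repH[OF Y]] .
  have D: "fsub (vsym (rep Y) (rep (ladd Q X X'))) (vsym ?b (?a \<oplus> ?a')) \<in> I"
    using XX Y Q_add_hom[OF h] add_hom[OF par] repH by (intro rcong) (auto simp: QX_add)
  have e: "push rr (vadd (vsym Y (ladd Q X X')) (vsmul (-1) (vadd (vsym Y X) (vsym Y X')))) = vadd (vsym ?b (rep (ladd Q X X'))) (vsmul (-1) (vadd (vsym ?b ?a) (vsym ?b ?a')))"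
    by (simp add: push_add push_smul push_vsym_rr)
  have "push rr (vadd (vsym Y (ladd Q X X')) (vsmul (-1) (vadd (vsym Y X) (vsym Y X')))) \<in> I" unfolding e
    by (rule wi_comb[OF R D I_zero I_zero, where ca=1 and cb=0 and cc=0])
      (simp add: vadd_def vsmul_def fsub_def)
  then show ?thesis using hq by (simp add: psiok_def)
qed

lemma psi_T3:
  assumes X: "X \<in> lhom Q" and Y: "Y \<in> lhom Q"
  shows "psiok (vadd (vsym (lsmul Q c X) Y) (vsmul (- c) (vsym X Y)))"
proof -
  let ?a = "rep X" and ?b = "rep Y"
  have hq: "HQ (vadd (vsym (lsmul Q c X) Y) (vsmul (- c) (vsym X Y)))"
    using X Y Q_sm_hom by (intro HQ_vadd HQ_vsmul HQ_vsym) auto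
  have R: "vadd (vsym (sm c ?a) ?b) (vsmul (- c) (vsym ?a ?b)) \<in> I"
    using rel_T3[OF repH[OF X] repH[OF Y]] .
  have D: "fsub (vsym (rep (lsmul Q c X)) (rep Y)) (vsym (sm c ?a) ?b) \<in> I"
    using X Y Q_sm_hom sm_hom repH by (intro rcong) (auto simp: QX_sm)
  have e: "push rr (vadd (vsym (lsmul Q c X) Y) (vsmul (- c) (vsym X Y))) = vadd (vsym (rep (lsmul Q c X)) ?b) (vsmul (- c) (vsym ?a ?b))"
    by (simp add: push_add push_smul push_vsym_rr)
  have "push rr (vadd (vsym (lsmul Q c X) Y) (vsmul (- c) (vsym X Y))) \<in> I" unfolding e
    by (rule wi_comb[OF R D I_zero I_zero, where ca=1 and cb=0 and cc=0])
      (simp add: vadd_def vsmul_def fsub_def)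
  then show ?thesis using hq by (simp add: psiok_def)
qed

lemma psi_T4:
  assumes X: "X \<in> lhom Q" and Y: "Y \<in> lhom Q"
  shows "psiok (vadd (vsym X (lsmul Q c Y)) (vsmul (- c) (vsym X Y)))"
proof -
  let ?a = "rep X" and ?b = "rep Y"
  have hq: "HQ (vadd (vsym X (lsmul Q c Y)) (vsmul (- c) (vsym X Y)))"
    using X Y Q_sm_hom by (intro HQ_vadd HQ_vsmul HQ_vsym) auto
  have R: "vadd (vsym ?a (sm c ?b)) (vsmul (- c) (vsym ?a ?b)) \<in> I"
    using rel_T4[OF repH[OF X] repH[OF Y]] .
  have D: "fsub (vsym (rep X) (rep (lsmul Q c Y))) (vsym ?a (sm c ?b)) \<in> I"
    using X Y Q_sm_hom sm_hom repH by (intro rcong) (auto simp: QX_sm)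
  have e: "push rr (vadd (vsym X (lsmul Q c Y)) (vsmul (- c) (vsym X Y))) = vadd (vsym ?a (rep (lsmul Q c Y))) (vsmul (- c) (vsym ?a ?b))"
    by (simp add: push_add push_smul push_vsym_rr)
  have "push rr (vadd (vsym X (lsmul Q c Y)) (vsmul (- c) (vsym X Y))) \<in> I" unfolding e
    by (rule wi_comb[OF R D I_zero I_zero, where ca=1 and cb=0 and cc=0])
      (simp add: vadd_def vsmul_def fsub_def)
  then show ?thesis using hq by (simp add: psiok_def)
qed

lemma psi_T5:
  assumes X: "X \<in> lhom Q" and X': "X' \<in> lhom Q" and Y: "Y \<in> lhom Q"
  shows "psiok (vadd (vsym (lbr Q X X') Y)
        (vadd (vsmul (-1) (vsym X (lbr Q X' Y))) (vsmul (lsign Q X X') (vsym X' (lbr Q X Y)))))"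
proof -
  let ?a = "rep X" and ?a' = "rep X'" and ?b = "rep Y" and ?s = "lsign Q X X'"
  let ?G = "vadd (vsym (lbr Q X X') Y)
        (vadd (vsmul (-1) (vsym X (lbr Q X' Y))) (vsmul (lsign Q X X') (vsym X' (lbr Q X Y))))"
  have hq: "HQ ?G"
    using X X' Y Q_br_hom by (intro HQ_vadd HQ_vsmul HQ_vsym) auto
  have R: "vadd (vsym (br ?a ?a') ?b)
        (vadd (vsmul (-1) (vsym ?a (br ?a' ?b))) (vsmul ?s (vsym ?a' (br ?a ?b)))) \<in> I"
    using rel_T5[OF repH[OF X] repH[OF X'] repH[OF Y]] lsign_rep[OF X X'] by simp
  have D1: "fsub (vsym (rep (lbr Q X X')) (rep Y)) (vsym (br ?a ?a') ?b) \<in> I"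
    using X X' Y Q_br_hom br_hom repH by (intro rcong) (auto simp: QX_br)
  have D2: "fsub (vsym (rep X) (rep (lbr Q X' Y))) (vsym ?a (br ?a' ?b)) \<in> I"
    using X X' Y Q_br_hom br_hom repH by (intro rcong) (auto simp: QX_br)
  have D3: "fsub (vsym (rep X') (rep (lbr Q X Y))) (vsym ?a' (br ?a ?b)) \<in> I"
    using X X' Y Q_br_hom br_hom repH by (intro rcong) (auto simp: QX_br)
  have e: "push rr ?G = vadd (vsym (rep (lbr Q X X')) ?b)
        (vadd (vsmul (-1) (vsym ?a (rep (lbr Q X' Y)))) (vsmul ?s (vsym ?a' (rep (lbr Q X Y)))))"
    by (simp add: push_add push_smul push_vsym_rr)
  have "push rr ?G \<in> I" unfolding e
    by (rule wi_comb[OF R D1 D2 D3, where ca=1 and cb="-1" and cc="?s"])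
      (simp add: vadd_def vsmul_def fsub_def algebra_simps)
  then show ?thesis using hq by (simp add: psiok_def)
qed

lemma psi_T6:
  assumes X: "X \<in> lhom Q" and Y: "Y \<in> lhom Q" and Y': "Y' \<in> lhom Q"
  shows "psiok (vadd (vsym X (lbr Q Y Y'))
        (vadd (vsmul (- ((-1) ^ (ldeg Q Y' * (ldeg Q X + ldeg Q Y)))) (vsym (lbr Q Y' X) Y))
              (vsmul (lsign Q X Y) (vsym (lbr Q Y X) Y'))))"
proof -
  let ?a = "rep X" and ?b = "rep Y" and ?b' = "rep Y'" and ?s = "lsign Q X Y"
    and ?e = "(-1) ^ (ldeg Q Y' * (ldeg Q X + ldeg Q Y))"
  let ?G = "vadd (vsym X (lbr Q Y Y'))
        (vadd (vsmul (- ((-1) ^ (ldeg Q Y' * (ldeg Q X + ldeg Q Y)))) (vsym (lbr Q Y' X) Y))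
              (vsmul (lsign Q X Y) (vsym (lbr Q Y X) Y')))"
  have hq: "HQ ?G"
    using X Y Y' Q_br_hom by (intro HQ_vadd HQ_vsmul HQ_vsym) auto
  have R: "vadd (vsym ?a (br ?b ?b'))
        (vadd (vsmul (- ?e) (vsym (br ?b' ?a) ?b))
              (vsmul ?s (vsym (br ?b ?a) ?b'))) \<in> I"
    using rel_T6[OF repH[OF X] repH[OF Y] repH[OF Y']] lsign_rep[OF X Y] ldeg_rep X Y Y' by simp
  have D1: "fsub (vsym (rep X) (rep (lbr Q Y Y'))) (vsym ?a (br ?b ?b')) \<in> I"
    using X Y Y' Q_br_hom br_hom repH by (intro rcong) (auto simp: QX_br)
  have D2: "fsub (vsym (rep (lbr Q Y' X)) (rep Y)) (vsym (br ?b' ?a) ?b) \<in> I"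
    using X Y Y' Q_br_hom br_hom repH by (intro rcong) (auto simp: QX_br)
  have D3: "fsub (vsym (rep (lbr Q Y X)) (rep Y')) (vsym (br ?b ?a) ?b') \<in> I"
    using X Y Y' Q_br_hom br_hom repH by (intro rcong) (auto simp: QX_br)
  have e: "push rr ?G = vadd (vsym ?a (rep (lbr Q Y Y')))
        (vadd (vsmul (- ?e) (vsym (rep (lbr Q Y' X)) ?b))
              (vsmul ?s (vsym (rep (lbr Q Y X)) ?b')))"
    by (simp add: push_add push_smul push_vsym_rr)
  have "push rr ?G \<in> I" unfolding e
    by (rule wi_comb[OF R D1 D2 D3, where ca=1 and cb="- ?e" and cc="?s"])
      (simp add: vadd_def vsmul_def fsub_def algebra_simps)
  then show ?thesis using hq by (simp add: psiok_def)
qed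

lemma psi_B1:
  assumes X: "X \<in> lhom Q" and Y: "Y \<in> lhom Q"
  shows "psiok (vadd (vsym X Y) (vsmul (lsign Q X Y) (vsym Y X)))"
proof -
  have hq: "HQ (vadd (vsym X Y) (vsmul (lsign Q X Y) (vsym Y X)))"
    using X Y by (intro HQ_vadd HQ_vsmul HQ_vsym) auto
  have e: "push rr (vadd (vsym X Y) (vsmul (lsign Q X Y) (vsym Y X)))
     = vadd (vsym (rep X) (rep Y)) (vsmul (lsign L (rep X) (rep Y)) (vsym (rep Y) (rep X)))"
    using X Y by (simp add: push_add push_smul push_vsym_rr lsign_rep)
  show ?thesis using hq rel_B1[OF repH[OF X] repH[OF Y]] by (simp add: psiok_def e)
qed

lemma psi_B2:
  assumes X: "X \<in> lev Q"
  shows "psiok (vsym X X)"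
proof -
  have hq: "HQ (vsym X X)" using X by (intro HQ_vsym) (auto simp: lhom_def)
  show ?thesis using hq rel_B2[of "rep X" L] rep_ev[OF X] by (simp add: psiok_def push_vsym_rr)
qed

lemma HQ_vsymp: "P \<in> lhom Q \<times> lhom Q \<Longrightarrow> HQ (vsymp P)" by (auto simp: HQ_def)

lemma psi_S:
  assumes P: "P \<in> lhom Q \<times> lhom Q" and T: "T \<in> lhom Q \<times> lhom Q"
  shows "psiok (vadd (vbr Q (vsym (fst P) (snd P)) (vsym (fst T) (snd T)))
           (vsmul ((-1) ^ (pdeg Q P * pdeg Q T)) (vbr Q (vsym (fst T) (snd T)) (vsym (fst P) (snd P)))))"
proof -
  let ?e = "(-1) ^ (pdeg Q P * pdeg Q T)"
  let ?G = "vadd (vbr Q (vsymp P) (vsymp T)) (vsmul ?e (vbr Q (vsymp T) (vsymp P)))"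
  have hq: "HQ ?G"
    using P T by (intro HQ_vadd HQ_vsmul HQ_vbr HQ_vsymp) auto
  have R: "vadd (vbr L (vsymp (rr P)) (vsymp (rr T))) (vsmul ?e (vbr L (vsymp (rr T)) (vsymp (rr P)))) \<in> I"
    using rel_S[OF rr_hom[OF P] rr_hom[OF T], folded vsymp_def] pdeg_rr P T by simp
  have e: "push rr ?G = vadd (push rr (vbr Q (vsymp P) (vsymp T))) (vsmul ?e (push rr (vbr Q (vsymp T) (vsymp P))))"
    by (simp add: push_add push_smul)
  have "push rr ?G \<in> I" unfolding e
    by (rule wi_comb[OF R sym2[OF P T] sym2[OF T P] I_zero, where ca=1 and cb="?e" and cc=0])
      (simp add: vadd_def vsmul_def fsub_def algebra_simps)
  then show ?thesis using hq by (simp add: psiok_def vsymp_def)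
qed

lemma psi_J:
  assumes P: "P \<in> lhom Q \<times> lhom Q" and T: "T \<in> lhom Q \<times> lhom Q" and U: "U \<in> lhom Q \<times> lhom Q"
  shows "psiok (let a = vsym (fst P) (snd P); b = vsym (fst T) (snd T); c = vsym (fst U) (snd U) in
        vadd (vadd (vsmul ((-1) ^ (pdeg Q P * pdeg Q U)) (vbr Q a (vbr Q b c)))
                   (vsmul ((-1) ^ (pdeg Q T * pdeg Q P)) (vbr Q b (vbr Q c a))))
             (vsmul ((-1) ^ (pdeg Q U * pdeg Q T)) (vbr Q c (vbr Q a b))))"
proof -
  let ?e1 = "(-1) ^ (pdeg Q P * pdeg Q U)" and ?e2 = "(-1) ^ (pdeg Q T * pdeg Q P)"
    and ?e3 = "(-1) ^ (pdeg Q U * pdeg Q T)"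
  let ?G = "vadd (vadd (vsmul ?e1 (vbr Q (vsymp P) (vbr Q (vsymp T) (vsymp U))))
                   (vsmul ?e2 (vbr Q (vsymp T) (vbr Q (vsymp U) (vsymp P)))))
             (vsmul ?e3 (vbr Q (vsymp U) (vbr Q (vsymp P) (vsymp T))))"
  have hq: "HQ ?G"
    using P T U by (intro HQ_vadd HQ_vsmul HQ_vbr HQ_vsymp) auto
  have R: "vadd (vadd (vsmul ?e1 (vbr L (vsymp (rr P)) (vbr L (vsymp (rr T)) (vsymp (rr U)))))
                   (vsmul ?e2 (vbr L (vsymp (rr T)) (vbr L (vsymp (rr U)) (vsymp (rr P))))))
             (vsmul ?e3 (vbr L (vsymp (rr U)) (vbr L (vsymp (rr P)) (vsymp (rr T))))) \<in> I"
    using rel_J[OF rr_hom[OF P] rr_hom[OF T] rr_hom[OF U], folded vsymp_def] pdeg_rr P T U by (simp add: Let_def)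
  have e: "push rr ?G = vadd (vadd (vsmul ?e1 (push rr (vbr Q (vsymp P) (vbr Q (vsymp T) (vsymp U)))))
                   (vsmul ?e2 (push rr (vbr Q (vsymp T) (vbr Q (vsymp U) (vsymp P))))))
             (vsmul ?e3 (push rr (vbr Q (vsymp U) (vbr Q (vsymp P) (vsymp T)))))"
    by (simp add: push_add push_smul)
  have "push rr ?G \<in> I" unfolding e
    by (rule wi_comb[OF R sym3[OF P T U] sym3[OF T U P] sym3[OF U P T], where ca="?e1" and cb="?e2" and cc="?e3"])
      (simp add: vadd_def vsmul_def fsub_def algebra_simps)
  then show ?thesis using hq by (simp add: psiok_def vsymp_def Let_def)
qed

end

lemma wi_vadd: "f \<in> wedge_ideal L \<Longrightarrow> g \<in> wedge_ideal L \<Longrightarrow> vadd f g \<in> wedge_ideal L"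
  unfolding wedge_ideal_def by (rule gen_ideal.add)
lemma wi_vsmul: "f \<in> wedge_ideal L \<Longrightarrow> vsmul c f \<in> wedge_ideal L"
  unfolding wedge_ideal_def by (rule gen_ideal.smul)

context LSZ begin

lemma psi_gen: assumes "G \<in> tens_rels Q \<union> lsa_rels Q \<union> box_rels Q" shows "psiok G"
  using assms
  apply (simp only: tens_rels_def lsa_rels_def box_rels_def Un_iff mem_Collect_eq)
  apply (elim disjE exE conjE)
  apply (simp_all only:)
  apply (auto intro: psi_T1 psi_T2 psi_T3 psi_T4 psi_T5 psi_T6 psi_B1 psi_B2 psi_S psi_J)
  done

lemma VL_HQ: "w \<in> VL Q \<Longrightarrow> HQ w" by (simp add: VL_def HQ_def supp_def)

lemma push_VL: assumes "HQ w" shows "push rr w \<in> VL L"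
proof -
  have "supp (push rr w) \<subseteq> rr ` supp w" by (rule supp_push)
  also have "\<dots> \<subseteq> lhom L \<times> lhom L" using assms by (force simp: HQ_def rr_def intro!: repH)
  moreover have "finite (supp (push rr w))" using assms by (simp add: HQ_def)
  ultimately show ?thesis by (auto simp: VL_def supp_def)
qed

lemma psi_ideal: "G \<in> gen_ideal Q (tens_rels Q \<union> lsa_rels Q \<union> box_rels Q) \<Longrightarrow> psiok G"
proof (induction rule: gen_ideal.induct)
  case (gen g)
  then show ?case by (rule psi_gen)
next
  case (add f g)
  then have h: "HQ f" "HQ g" "push rr f \<in> I" "push rr g \<in> I" by (auto simp: psiok_def)
  then have "push rr (vadd f g) = vadd (push rr f) (push rr g)" by (intro push_add) (auto simp: HQ_def)
  then show ?case using h HQ_vadd wi_vadd by (simp add: psiok_def)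
next
  case (smul f c)
  then have h: "HQ f" "push rr f \<in> I" by (auto simp: psiok_def)
  then have "push rr (vsmul c f) = vsmul c (push rr f)" by (intro push_smul) (auto simp: HQ_def)
  then show ?case using h HQ_vsmul wi_vsmul by (simp add: psiok_def)
next
  case (brl f w)
  have hw: "HQ w" using brl VL_HQ by simp
  have hf: "HQ f" "push rr f \<in> I" using brl by (auto simp: psiok_def)
  have "vbr L (push rr w) (push rr f) \<in> I" using wi_brl[OF hf(2) push_VL[OF hw]] .
  then have "push rr (vbr Q w f) \<in> I" using psi_br[OF hw hf(1)] wi_from_sub by blast
  then show ?case using HQ_vbr[OF hw hf(1)] by (simp add: psiok_def)
next
  case (brr f w)
  have hw: "HQ w" using brr VL_HQ by simp
  have hf: "HQ f" "push rr f \<in> I" using brr by (auto simp: psiok_def)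
  have "vbr L (push rr f) (push rr w) \<in> I" using wi_brr[OF hf(2) push_VL[OF hw]] .
  then have "push rr (vbr Q f w) \<in> I" using psi_br[OF hf(1) hw] wi_from_sub by blast
  then show ?case using HQ_vbr[OF hf(1) hw] by (simp add: psiok_def)
qed

end

context LS begin

lemma nat_push_eq: assumes "finite (supp f)" shows "nat_push L N f = push csp f"
proof
  fix q
  have "nat_push L N f q = (\<Sum>p\<in>{p \<in> supp f. csp p = q}. f p)"
    by (simp add: nat_push_def supp_def csp_def)
  also have "\<dots> = (\<Sum>p\<in>supp f. if csp p = q then f p else 0)"
    using assms by (rule sum.inter_filter)
  also have "\<dots> = push csp f q"
    by (auto simp: push_def fs_def vsmul_def vsymp_apply intro!: sum.cong)
  finally show "nat_push L N f q = push csp f q" .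
qed

lemma csp_hom: "p \<in> lhom L \<times> lhom L \<Longrightarrow> csp p \<in> lhom Q \<times> lhom Q"
  by (auto simp: csp_def cs_hom)

lemma vsym_Nz: assumes Y: "Y \<in> lhom Q" shows "vsym (cs z) Y \<in> wedge_ideal Q"
proof -
  have "cs z \<in> lhom Q" using cs_hom z_hom by simp
  then have "vadd (vsym (lsmul Q 0 (cs z)) Y) (vsmul (- 0) (vsym (cs z) Y)) \<in> wedge_ideal Q"
    using rel_T3[OF _ Y, of "cs z" 0] by blast
  moreover have "lsmul Q 0 (cs z) = cs z" using Q_sm[of z 0] by simp
  ultimately show ?thesis by (simp add: vadd_def vsmul_def)
qed

lemma easy: assumes m: "nat_wedge_map_mono L N" shows "N \<subseteq> ext_center L"
proof
  fix n assume n: "n \<in> N"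
  have "wedge_elt L n y \<in> I" if y: "y \<in> C" for y
  proof -
    let ?n0 = "comp0 L n" and ?n1 = "comp1 L n" and ?y0 = "comp0 L y" and ?y1 = "comp1 L y"
    have nd: "?n0 \<in> Ev" "?n1 \<in> Od" "?n0 \<in> N" "?n1 \<in> N"
      using comp_decomp[of n] n N_comp0 N_comp1 by auto
    have yd: "?y0 \<in> Ev" "?y1 \<in> Od" using comp_decomp[OF y] by auto
    have hs: "?n0 \<in> lhom L" "?n1 \<in> lhom L" "?y0 \<in> lhom L" "?y1 \<in> lhom L"
      using nd yd by (auto simp: lhom_iff)
    let ?W = "wedge_elt L n y"
    have sW: "supp ?W \<subseteq> {(?n0, ?y0), (?n0, ?y1), (?n1, ?y0), (?n1, ?y1)}"
      unfolding wedge_elt_def using supp_vadd by (fastforce simp: supp_def vadd_def vsym_def)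
    then have fW: "finite (supp ?W)" by (rule finite_subset) simp
    have VW: "?W \<in> VL L" using sW hs fW by (auto simp: VL_def supp_def)
    have cz: "cs ?n0 = cs z" "cs ?n1 = cs z" using nd coset_N_iff by auto
    have "nat_push L N ?W = push csp ?W" using nat_push_eq[OF fW] .
    also have "\<dots> = vadd (vadd (vsym (cs z) (cs ?y0)) (vsym (cs z) (cs ?y1)))
                          (vadd (vsym (cs z) (cs ?y0)) (vsym (cs z) (cs ?y1)))"
      unfolding wedge_elt_def by (simp add: push_add push_vsym vsymp_def csp_def cz)
    finally have e: "nat_push L N ?W = \<dots>" .
    have "vsym (cs z) (cs ?y0) \<in> wedge_ideal Q" "vsym (cs z) (cs ?y1) \<in> wedge_ideal Q"
      using vsym_Nz cs_hom hs by auto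
    then have "nat_push L N ?W \<in> wedge_ideal Q" unfolding e by (intro wi_vadd)
    then show ?thesis using m VW by (simp add: nat_wedge_map_mono_def)
  qed
  then show "n \<in> ext_center L" using n by (simp add: ext_center_def)
qed

end

context LSZ begin

lemma mono: "nat_wedge_map_mono L N"
  unfolding nat_wedge_map_mono_def
proof (intro ballI impI)
  fix f assume f: "f \<in> VL L" and np: "nat_push L N f \<in> wedge_ideal Q"
  have fin: "finite (supp f)" and sh: "supp f \<subseteq> lhom L \<times> lhom L" using f by (auto simp: VL_def supp_def)
  have "push csp f \<in> wedge_ideal Q" using np nat_push_eq[OF fin] by simp
  then have pi: "push rr (push csp f) \<in> I" using psi_ideal by (simp add: wedge_ideal_def psiok_def)
  have e1: "push rr (push csp f) = fs (supp f) (\<lambda>p. vsmul (f p) (vsymp (rr (csp p))))"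
    unfolding push_def[of csp] using fin by (simp add: push_fs push_smul push_vsymp)
  have e2: "f = fs (supp f) (\<lambda>p. vsmul (f p) (vsymp p))" using expand[OF fin subset_refl] .
  have e: "fsub f (push rr (push csp f)) = fs (supp f) (\<lambda>p. (\<lambda>q. (- f p) * fsub (vsymp (rr (csp p))) (vsymp p) q))"
    unfolding e1 by (subst e2) (auto simp: fs_def fsub_def vsmul_def sum_subtractf algebra_simps)
  have "(\<lambda>q. (- f p) * fsub (vsymp (rr (csp p))) (vsymp p) q) \<in> I" if "p \<in> supp f" for p
    using pcong[of "csp p" p] csp_hom sh that by (intro wi_smul') auto
  then have "fsub f (push rr (push csp f)) \<in> I" unfolding e
    by (rule wi_fs[OF I_zero fin])
  then show "f \<in> I" using pi by (rule wi_from_sub)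
qed

end

theorem mainTheorem15:
  fixes L :: "('k::field, 'a) lsa" and N :: "'a set"
  assumes "is_lsa L"
    and "(2::'k) \<noteq> 0" and "(3::'k) \<noteq> 0"
    and "graded_ideal L N"
  shows "N \<subseteq> ext_center L \<longleftrightarrow> nat_wedge_map_mono L N"
proof -
  interpret LS L N using assms(1,4) by unfold_locales
  show ?thesis
  proof
    assume h: "N \<subseteq> ext_center L"
    interpret LSZ L N using h by unfold_locales
    show "nat_wedge_map_mono L N" by (rule mono)
  next
    assume "nat_wedge_map_mono L N"
    then show "N \<subseteq> ext_center L" by (rule easy)
  qed
qed

end
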